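(* Let $P\in\mathbb{C}[y]$ with $\deg P\geq 2$, $\delta\in\mathbb{C}\setminus\{0\}$, $h_1(x,y)=(y,P(y)-\delta x)$, $\theta\in(0,2\pi)\setminus\{\frac{\pi}{2},\pi,\frac{3\pi}{2}\}$, $R_\theta$ the linear map of $\mathbb{C}^2$ with matrix $\begin{pmatrix}\cos\theta&-\sin\theta\\ \sin\theta&\cos\theta\end{pmatrix}$, $h_2=R_\theta^{-1}\circ h_1\circ R_\theta$ and $G=\langle h_1,h_2\rangle$. Let $\nu=a_1\delta_{h_1}+a_2\delta_{h_2}+a_3\delta_{h_1^{-1}}+a_4\delta_{h_2^{-1}}$ with $a_i>0$ and $\sum_{i=1}^4a_i=1$, and equip $G^{\mathbb{N}}$ with the product measure $\nu^{\mathbb{N}}$. For $\omega=(\omega_n)\in G^{\mathbb{N}}$ put $S_n(\omega)=\omega_n\circ\cdots\circ\omega_1$. Then for $\nu^{\mathbb{N}}$-almost every $\omega$ the sequence $(\mathrm{length}(S_n(\omega)))_{n\in\mathbb{N}}$ is unbounded; in fact there is $\epsilon>0$ such that for $\nu^{\mathbb{N}}$-almost every $\omega$ one has $\mathrm{length}(S_n(\omega))\geq\epsilon n$ for all sufficiently large $n$.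
   Context: $\mathrm{length}(g)$ for $g\in G$ denotes the length of $g$ as a reduced word in the letters $h_1^{\pm1},h_2^{\pm1}$. *)

theory Defs
  imports "HOL-Probability.Probability" "HOL-Computational_Algebra.Polynomial"
begin

type_synonym cmap = "complex \<times> complex \<Rightarrow> complex \<times> complex"

definition henon :: "complex poly \<Rightarrow> complex \<Rightarrow> cmap" where
  "henon P d = (\<lambda>(x, y). (y, poly P y - d * x))"

definition henon_inv :: "complex poly \<Rightarrow> complex \<Rightarrow> cmap" where
  "henon_inv P d = (\<lambda>(u, v). ((poly P u - v) / d, u))"

definition rot :: "real \<Rightarrow> cmap" where
  "rot t = (\<lambda>(x, y). (complex_of_real (cos t) * x - complex_of_real (sin t) * y,
                      complex_of_real (sin t) * x + complex_of_real (cos t) * y))"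

text \<open>Generators indexed by letters: 0 = h1, 1 = h2, 2 = h1^-1, 3 = h2^-1,
  where h2 = R^-1 o h1 o R, and R^-1 = rot (- t).\<close>
definition gen :: "complex poly \<Rightarrow> complex \<Rightarrow> real \<Rightarrow> nat \<Rightarrow> cmap" where
  "gen P d t i =
     (if i = 0 then henon P d
      else if i = 1 then rot (- t) \<circ> henon P d \<circ> rot t
      else if i = 2 then henon_inv P d
      else rot (- t) \<circ> henon_inv P d \<circ> rot t)"

definition word_eval :: "complex poly \<Rightarrow> complex \<Rightarrow> real \<Rightarrow> nat list \<Rightarrow> cmap" where
  "word_eval P d t w = foldr (\<lambda>i f. gen P d t i \<circ> f) w id"

definition word_length :: "complex poly \<Rightarrow> complex \<Rightarrow> real \<Rightarrow> cmap \<Rightarrow> nat" where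
  "word_length P d t g =
     (LEAST n. \<exists>w. length w = n \<and> set w \<subseteq> {0..3} \<and> word_eval P d t w = g)"

definition nu :: "complex poly \<Rightarrow> complex \<Rightarrow> real \<Rightarrow> real \<Rightarrow> real \<Rightarrow> real \<Rightarrow> real \<Rightarrow> cmap pmf" where
  "nu P d t a1 a2 a3 a4 =
     map_pmf (gen P d t)
       (embed_pmf (\<lambda>i::nat. if i = 0 then a1 else if i = 1 then a2
                    else if i = 2 then a3 else if i = 3 then a4 else 0))"

text \<open>S_n(omega) = omega_n o ... o omega_1 (omega indexed from 0 here: omega 0 = omega_1).\<close>
definition Sn :: "(nat \<Rightarrow> cmap) \<Rightarrow> nat \<Rightarrow> cmap" where
  "Sn \<omega> n = foldr (\<lambda>k f. f \<circ> \<omega> k) [0..<n] id"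

end

theory Submission
  imports Defs "HOL-Computational_Algebra.Fundamental_Theorem_Algebra"
begin

definition inv4 :: "nat \<Rightarrow> nat" where
  "inv4 i = (if i = 0 then 2 else if i = 1 then 3 else if i = 2 then 0 else 1)"

definition step :: "nat list \<Rightarrow> nat \<Rightarrow> nat list" where
  "step w j = (case w of [] \<Rightarrow> [j] | a # r \<Rightarrow> if a = inv4 j then r else j # w)"

fun stk :: "('g \<Rightarrow> nat) \<Rightarrow> nat list \<Rightarrow> (nat \<Rightarrow> 'g) \<Rightarrow> nat \<Rightarrow> nat list" where
  "stk lo w \<omega> 0 = w"
| "stk lo w \<omega> (Suc n) = step (stk lo w \<omega> n) (lo (\<omega> n))"

lemma stk_shift: "stk lo w (case_nat g \<omega>) (Suc n) = stk lo (step w (lo g)) \<omega> n"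
  by (induction n) auto

lemma step_letters: "set w \<subseteq> {..<4} \<Longrightarrow> j < 4 \<Longrightarrow> set (step w j) \<subseteq> {..<4}"
  by (auto simp: step_def split: list.splits)

lemma pair_ineq:
  fixes x y \<tau> :: real
  assumes "0 < \<tau>" "2 * \<tau> \<le> x" "2 * \<tau> \<le> y"
  shows "x * (y / (y + \<tau>)) + y * (x / (x + \<tau>)) \<le> x + y - 4 / 3 * \<tau>"
proof -
  have e1: "x * (y / (y + \<tau>)) = x - \<tau> * (x / (y + \<tau>))" using assms by (simp add: field_simps)
  have e2: "y * (x / (x + \<tau>)) = y - \<tau> * (y / (x + \<tau>))" using assms by (simp add: field_simps)
  have f1: "x / (y + \<tau>) \<ge> 2 * x / (3 * y)" using assms by (simp add: field_simps) 
  have f2: "y / (x + \<tau>) \<ge> 2 * y / (3 * x)" using assms by (simp add: field_simps)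
  have g: "x / y + y / x \<ge> 2"
  proof -
    have "x / y + y / x - 2 = (x - y)^2 / (x * y)" using assms by (simp add: field_simps power2_eq_square)
    moreover have "(x - y)^2 / (x * y) \<ge> 0" using assms by simp
    ultimately show ?thesis by linarith
  qed
  have "2 * x / (3 * y) + 2 * y / (3 * x) = 2/3 * (x / y + y / x)" by (simp add: field_simps)
  hence "x / (y + \<tau>) + y / (x + \<tau>) \<ge> 4/3" using f1 f2 g by linarith
  hence "\<tau> * (x / (y + \<tau>) + y / (x + \<tau>)) \<ge> \<tau> * (4/3)" using assms(1) by (intro mult_left_mono) auto
  hence "\<tau> * (x / (y + \<tau>)) + \<tau> * (y / (x + \<tau>)) \<ge> 4/3 * \<tau>" by (simp add: algebra_simps)
  thus ?thesis using e1 e2 by linarith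
qed

lemma sum4: "(\<Sum>j<(4::nat). f j) = f 0 + f 1 + f 2 + (f 3::'a::comm_monoid_add)"
  by (simp add: eval_nat_numeral add.assoc)

context
  fixes A :: "nat \<Rightarrow> real"
begin

definition tau :: real where "tau = min (min (A 0) (A 1)) (min (A 2) (A 3)) / 2"
definition beta :: "nat \<Rightarrow> real" where "beta j = A (inv4 j) / (A (inv4 j) + tau)"
definition V :: "nat list \<Rightarrow> real" where "V w = prod_list (map beta w)"
definition rho :: real where "rho = 1 - tau / 3"

end

context
  fixes A :: "nat \<Rightarrow> real"
  assumes Apos: "\<And>i. i < 4 \<Longrightarrow> A i > 0" and Asum: "A 0 + A 1 + A 2 + A 3 = 1"
begin

lemma A0: "A 0 > 0" and A1: "A 1 > 0" and A2: "A 2 > 0" and A3: "A 3 > 0"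
  using Apos[of 0] Apos[of 1] Apos[of 2] Apos[of 3] by auto

lemma tau_pos: "tau A > 0" using A0 A1 A2 A3 by (simp add: tau_def)

lemma tau_le: "2 * tau A \<le> A 0" "2 * tau A \<le> A 1" "2 * tau A \<le> A 2" "2 * tau A \<le> A 3"
  by (auto simp: tau_def)

lemma beta_vals: "beta A 0 = A 2 / (A 2 + tau A)" "beta A 1 = A 3 / (A 3 + tau A)"
   "beta A 2 = A 0 / (A 0 + tau A)" "beta A 3 = A 1 / (A 1 + tau A)"
  by (auto simp: beta_def inv4_def)

lemma beta_pos: "j < 4 \<Longrightarrow> beta A j > 0"
  using Apos[of "inv4 j"] tau_pos by (auto simp: beta_def inv4_def intro!: divide_pos_pos)

lemma beta_lt1: "beta A j < 1"
  using tau_pos A0 A1 A2 A3 by (auto simp: beta_def inv4_def)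

lemma beta_eq: "A (inv4 j) = beta A j * (A (inv4 j) + tau A)"
  using tau_pos A0 A1 A2 A3 by (auto simp: beta_def inv4_def)

lemma pair02: "A 0 * beta A 0 + A 2 * beta A 2 \<le> A 0 + A 2 - 4/3 * tau A"
  using pair_ineq[OF tau_pos, of "A 0" "A 2"] tau_le by (simp add: beta_vals)
lemma pair13: "A 1 * beta A 1 + A 3 * beta A 3 \<le> A 1 + A 3 - 4/3 * tau A"
  using pair_ineq[OF tau_pos, of "A 1" "A 3"] tau_le by (simp add: beta_def inv4_def)

lemma Ab_le: "A j * beta A j \<le> A j" if "j < 4"
  using beta_lt1[of j] Apos[OF that] by (simp add: mult_left_le)

lemma V_nonneg: "set w \<subseteq> {..<4} \<Longrightarrow> V A w \<ge> 0"
  by (induction w) (auto simp: V_def intro!: mult_nonneg_nonneg less_imp_le[OF beta_pos])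

lemma drift: assumes "set w \<subseteq> {..<4}"
  shows "(\<Sum>j<4. A j * V A (step w j)) \<le> rho A * V A w"
proof (cases w)
  case Nil
  thus ?thesis using pair02 pair13 tau_pos Asum
    by (simp add: sum4 step_def V_def rho_def)
next
  case (Cons a r)
  have a4: "a < 4" using assms Cons by auto
  have Vr: "V A r \<ge> 0" using assms Cons V_nonneg by auto
  have Vw: "V A w = beta A a * V A r" using Cons by (simp add: V_def)
  have b0: "beta A a \<ge> 0" using beta_pos[OF a4] by simp
  have Ab0: "A 0 * beta A 0 \<le> A 0" "A 1 * beta A 1 \<le> A 1" "A 2 * beta A 2 \<le> A 2" "A 3 * beta A 3 \<le> A 3"
    using Ab_le by auto
  have "a = 0 \<or> a = 1 \<or> a = 2 \<or> a = 3" using a4 by auto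
  then obtain S where S: "(\<Sum>j<4. A j * V A (step w j)) = beta A a * V A r * (S + A (inv4 a) + tau A)"
     and Sle: "S + A (inv4 a) + tau A \<le> rho A"
  proof (elim disjE)
    assume a: "a = 0"
    have e: "A 2 = beta A 0 * (A 2 + tau A)" using beta_eq[of 0] by (simp add: inv4_def)
    have e2: "A 2 * V A r = beta A 0 * (A 2 + tau A) * V A r"
      using arg_cong[of _ _ "\<lambda>x. x * V A r", OF e] by simp
    have sumeq: "(\<Sum>j<4. A j * V A (step w j)) = A 0 * (beta A 0 * (beta A 0 * V A r)) + A 1 * (beta A 1 * (beta A 0 * V A r)) + A 2 * V A r + A 3 * (beta A 3 * (beta A 0 * V A r))"
      by (simp add: sum4 step_def V_def Cons inv4_def a)
    have eq: "(\<Sum>j<4. A j * V A (step w j)) = beta A a * V A r * ((A 0 * beta A 0 + A 1 * beta A 1 + A 3 * beta A 3) + A (inv4 a) + tau A)"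
      unfolding sumeq using e2 by (simp add: a inv4_def) algebra
    show ?thesis
      apply (rule that[OF eq])
      using pair13 Ab0 Asum a by (simp add: rho_def inv4_def)
  next
    assume a: "a = 1"
    have e: "A 3 = beta A 1 * (A 3 + tau A)" using beta_eq[of 1] by (simp add: inv4_def)
    have e2: "A 3 * V A r = beta A 1 * (A 3 + tau A) * V A r"
      using arg_cong[of _ _ "\<lambda>x. x * V A r", OF e] by simp
    have sumeq: "(\<Sum>j<4. A j * V A (step w j)) = A 0 * (beta A 0 * (beta A 1 * V A r)) + A 1 * (beta A 1 * (beta A 1 * V A r)) + A 2 * (beta A 2 * (beta A 1 * V A r)) + A 3 * V A r"
      by (simp add: sum4 step_def V_def Cons inv4_def a)
    have eq: "(\<Sum>j<4. A j * V A (step w j)) = beta A a * V A r * ((A 1 * beta A 1 + A 0 * beta A 0 + A 2 * beta A 2) + A (inv4 a) + tau A)"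
      unfolding sumeq using e2 by (simp add: a inv4_def) algebra
    show ?thesis
      apply (rule that[OF eq])
      using pair02 Ab0 Asum a by (simp add: rho_def inv4_def)
  next
    assume a: "a = 2"
    have e: "A 0 = beta A 2 * (A 0 + tau A)" using beta_eq[of 2] by (simp add: inv4_def)
    have e2: "A 0 * V A r = beta A 2 * (A 0 + tau A) * V A r"
      using arg_cong[of _ _ "\<lambda>x. x * V A r", OF e] by simp
    have sumeq: "(\<Sum>j<4. A j * V A (step w j)) = A 0 * V A r + A 1 * (beta A 1 * (beta A 2 * V A r)) + A 2 * (beta A 2 * (beta A 2 * V A r)) + A 3 * (beta A 3 * (beta A 2 * V A r))"
      by (simp add: sum4 step_def V_def Cons inv4_def a)
    have eq: "(\<Sum>j<4. A j * V A (step w j)) = beta A a * V A r * ((A 2 * beta A 2 + A 1 * beta A 1 + A 3 * beta A 3) + A (inv4 a) + tau A)"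
      unfolding sumeq using e2 by (simp add: a inv4_def) algebra
    show ?thesis
      apply (rule that[OF eq])
      using pair13 Ab0 Asum a by (simp add: rho_def inv4_def)
  next
    assume a: "a = 3"
    have e: "A 1 = beta A 3 * (A 1 + tau A)" using beta_eq[of 3] by (simp add: inv4_def)
    have e2: "A 1 * V A r = beta A 3 * (A 1 + tau A) * V A r"
      using arg_cong[of _ _ "\<lambda>x. x * V A r", OF e] by simp
    have sumeq: "(\<Sum>j<4. A j * V A (step w j)) = A 0 * (beta A 0 * (beta A 3 * V A r)) + A 1 * V A r + A 2 * (beta A 2 * (beta A 3 * V A r)) + A 3 * (beta A 3 * (beta A 3 * V A r))"
      by (simp add: sum4 step_def V_def Cons inv4_def a)
    have eq: "(\<Sum>j<4. A j * V A (step w j)) = beta A a * V A r * ((A 3 * beta A 3 + A 0 * beta A 0 + A 2 * beta A 2) + A (inv4 a) + tau A)"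
      unfolding sumeq using e2 by (simp add: a inv4_def) algebra
    show ?thesis
      apply (rule that[OF eq])
      using pair02 Ab0 Asum a by (simp add: rho_def inv4_def)
  qed
  have "beta A a * V A r * (S + A (inv4 a) + tau A) \<le> beta A a * V A r * rho A"
    using Sle b0 Vr by (intro mult_left_mono) auto
  thus ?thesis using S Vw by (simp add: algebra_simps)
qed

end


lemma stk_letters: "set w \<subseteq> {..<4} \<Longrightarrow> (\<And>g. lo g < 4) \<Longrightarrow> set (stk lo w \<omega> n) \<subseteq> {..<4}"
  by (induction n) (simp_all add: step_letters)

lemma stk_meas: "(\<lambda>\<omega>. stk lo w \<omega> n) \<in> measurable (PiM UNIV (\<lambda>_::nat. measure_pmf N)) (count_space UNIV)"
proof (induction n)
  case 0 thus ?case by simp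
next
  case (Suc n)
  have m: "(\<lambda>\<omega>. step v (lo (\<omega> n))) \<in> measurable (PiM UNIV (\<lambda>_::nat. measure_pmf N)) (count_space UNIV)" for v
    by (rule measurable_PiM_component_rev[where f = "\<lambda>x. step v (lo x)"]) auto
  show ?case
    using measurable_compose_countable[where f = "\<lambda>v \<omega>. step v (lo (\<omega> n))", OF m Suc] by simp
qed

context
  fixes A :: "nat \<Rightarrow> real" and N :: "'g pmf" and lo :: "'g \<Rightarrow> nat"
  assumes Apos: "\<And>i. i < 4 \<Longrightarrow> A i > 0" and Asum: "A 0 + A 1 + A 2 + A 3 = 1"
    and lo4: "\<And>g. lo g < 4"
    and intN: "\<And>f. (\<integral>\<^sup>+g. f (lo g) \<partial>measure_pmf N) = (\<Sum>j<4. ennreal (A j) * f j)"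
begin

lemma rho_pos: "rho A > 0"
  using Asum Apos[of 0] Apos[of 1] Apos[of 2] Apos[of 3] by (auto simp: rho_def tau_def min_def)

lemma seqsp: "sequence_space (measure_pmf N)"
  unfolding sequence_space_def by (rule product_prob_spaceI) (rule prob_space_measure_pmf)

lemma expV: "set w \<subseteq> {..<4} \<Longrightarrow>
   (\<integral>\<^sup>+\<omega>. ennreal (V A (stk lo w \<omega> n)) \<partial>PiM UNIV (\<lambda>_::nat. measure_pmf N)) \<le> ennreal (rho A ^ n * V A w)"
proof (induction n arbitrary: w)
  case 0
  interpret S: sequence_space "measure_pmf N" by (rule seqsp)
  show ?case by (simp add: S.emeasure_space_1)
next
  case (Suc n)
  interpret S: sequence_space "measure_pmf N" by (rule seqsp)
  let ?f = "\<lambda>\<omega>. ennreal (V A (stk lo w \<omega> (Suc n)))"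
  have fm: "?f \<in> borel_measurable S.S"
    using measurable_compose[OF stk_meas[of lo w "Suc n" N], of "\<lambda>v. ennreal (V A v)" borel] by simp
  have cm: "(\<lambda>(s, \<omega>). case_nat s \<omega>) \<in> measurable (measure_pmf N \<Otimes>\<^sub>M S.S) S.S"
    by measurable
  have "(\<integral>\<^sup>+\<omega>. ?f \<omega> \<partial>S.S) = (\<integral>\<^sup>+\<omega>. ?f \<omega> \<partial>distr (measure_pmf N \<Otimes>\<^sub>M S.S) S.S (\<lambda>(s, \<omega>). case_nat s \<omega>))"
    by (simp add: S.PiM_iter)
  also have "\<dots> = (\<integral>\<^sup>+x. ?f ((\<lambda>(s, \<omega>). case_nat s \<omega>) x) \<partial>(measure_pmf N \<Otimes>\<^sub>M S.S))"
    using fm by (intro nn_integral_distr[OF cm]) simp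
  also have "\<dots> = (\<integral>\<^sup>+s. \<integral>\<^sup>+\<omega>. ?f ((\<lambda>(s, \<omega>). case_nat s \<omega>) (s, \<omega>)) \<partial>S.S \<partial>measure_pmf N)"
    by (rule S.nn_integral_fst[symmetric]) (use measurable_comp[OF cm fm] in \<open>simp add: comp_def\<close>)
  also have "\<dots> = (\<integral>\<^sup>+s. \<integral>\<^sup>+\<omega>. ennreal (V A (stk lo (step w (lo s)) \<omega> n)) \<partial>S.S \<partial>measure_pmf N)"
    by (simp only: prod.case stk_shift)
  also have "\<dots> \<le> (\<integral>\<^sup>+s. ennreal (rho A ^ n * V A (step w (lo s))) \<partial>measure_pmf N)"
    by (intro nn_integral_mono Suc.IH step_letters Suc.prems lo4)
  also have "\<dots> = (\<Sum>j<4. ennreal (A j) * ennreal (rho A ^ n * V A (step w j)))"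
    by (rule intN)
  also have "\<dots> = ennreal (\<Sum>j<4. A j * (rho A ^ n * V A (step w j)))"
  proof -
    have nn: "0 \<le> rho A ^ n * V A (step w j)" if "j < 4" for j
      using rho_pos V_nonneg[OF Apos Asum step_letters[OF Suc.prems that]] by simp
    have "(\<Sum>j<4. ennreal (A j) * ennreal (rho A ^ n * V A (step w j)))
        = (\<Sum>j<4. ennreal (A j * (rho A ^ n * V A (step w j))))"
      apply (intro sum.cong refl)
      subgoal for j using Apos[of j] nn[of j] by (simp add: ennreal_mult)
      done
    also have "\<dots> = ennreal (\<Sum>j<4. A j * (rho A ^ n * V A (step w j)))"
      using Apos nn by (intro sum_ennreal) (simp add: less_imp_le)
    finally show ?thesis .
  qed
  also have "\<dots> \<le> ennreal (rho A ^ Suc n * V A w)"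
  proof (rule ennreal_leI)
    have "(\<Sum>j<4. A j * (rho A ^ n * V A (step w j))) = rho A ^ n * (\<Sum>j<4. A j * V A (step w j))"
      by (simp add: sum_distrib_left algebra_simps)
    also have "\<dots> \<le> rho A ^ n * (rho A * V A w)"
      using drift[OF Apos Asum Suc.prems] rho_pos by (intro mult_left_mono) auto
    finally show "(\<Sum>j<4. A j * (rho A ^ n * V A (step w j))) \<le> rho A ^ Suc n * V A w" by (simp add: algebra_simps)
  qed
  finally show ?case .
qed


definition bmin :: real where "bmin = min (min (beta A 0) (beta A 1)) (min (beta A 2) (beta A 3))"

lemma bmin_pos: "bmin > 0" and bmin_lt1: "bmin < 1"
  using beta_pos[OF Apos Asum, of 0] beta_pos[OF Apos Asum, of 1] beta_pos[OF Apos Asum, of 2]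
    beta_pos[OF Apos Asum, of 3] beta_lt1[OF Apos Asum, of 0]
  by (auto simp: bmin_def)

lemma bmin_le: "j < 4 \<Longrightarrow> bmin \<le> beta A j"
  by (auto simp: bmin_def less_Suc_eq numeral_eq_Suc)

lemma V_ge: "set w \<subseteq> {..<4} \<Longrightarrow> bmin ^ length w \<le> V A w"
proof (induction w)
  case Nil thus ?case by (simp add: V_def)
next
  case (Cons a w)
  hence "bmin ^ length w \<le> V A w" "bmin \<le> beta A a" using bmin_le by auto
  moreover have "0 \<le> bmin ^ length w" using bmin_pos by simp
  ultimately have "bmin * bmin ^ length w \<le> beta A a * V A w"
    using bmin_pos by (intro mult_mono) auto
  thus ?case by (simp add: V_def)
qed

lemma rho_lt1: "rho A < 1"
  using Apos[of 0] Apos[of 1] Apos[of 2] Apos[of 3] by (auto simp: rho_def tau_def min_def)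

lemma linear_escape:
  "\<exists>\<epsilon>>0. AE \<omega> in PiM UNIV (\<lambda>_::nat. measure_pmf N).
      eventually (\<lambda>n. \<epsilon> * real n < real (length (stk lo [] \<omega> n))) sequentially"
proof -
  interpret S: sequence_space "measure_pmf N" by (rule seqsp)
  define \<epsilon> where "\<epsilon> = ln (rho A) / (2 * ln bmin)"
  define q where "q = exp (ln (rho A) / 2)"
  have lr: "ln (rho A) < 0" using rho_pos rho_lt1 by simp
  have lb: "ln bmin < 0" using bmin_pos bmin_lt1 by simp
  have epos: "\<epsilon> > 0" unfolding \<epsilon>_def using lr lb by (simp add: divide_neg_neg)
  have qpos: "q > 0" and qlt1: "q < 1" using lr by (auto simp: q_def)
  have rq: "rho A ^ n = q ^ n * q ^ n" for n
  proof -
    have "q * q = rho A" unfolding q_def using rho_pos by (simp add: exp_add[symmetric])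
    thus ?thesis by (simp add: power_mult_distrib[symmetric])
  qed
  define An where "An n = {\<omega> \<in> space S.S. real (length (stk lo [] \<omega> n)) \<le> \<epsilon> * real n}" for n
  have An_sets: "An n \<in> sets S.S" for n
  proof -
    have eq: "An n = (\<lambda>\<omega>. stk lo [] \<omega> n) -` {w. real (length w) \<le> \<epsilon> * real n} \<inter> space S.S"
      by (auto simp: An_def)
    show ?thesis by (subst eq) (rule measurable_sets[OF stk_meas], simp)
  qed
  have key: "q ^ n \<le> V A (stk lo [] \<omega> n)" if "real (length (stk lo [] \<omega> n)) \<le> \<epsilon> * real n" for \<omega> n
  proof -
    let ?l = "length (stk lo [] \<omega> n)"
    have lets: "set (stk lo [] \<omega> n) \<subseteq> {..<4}" using stk_letters[of "[]" lo] lo4 by simp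
    have "q ^ n = exp (real n * (ln (rho A) / 2))" unfolding q_def by (simp only: exp_of_nat_mult)
    also have "real n * (ln (rho A) / 2) = (\<epsilon> * real n) * ln bmin"
      unfolding \<epsilon>_def using lb by (simp add: field_simps)
    also have "exp ((\<epsilon> * real n) * ln bmin) \<le> exp (real ?l * ln bmin)"
      using that lb by (simp add: mult_right_mono_neg)
    also have "\<dots> = bmin ^ ?l" using bmin_pos by (simp add: exp_of_nat_mult)
    also have "\<dots> \<le> V A (stk lo [] \<omega> n)" by (rule V_ge[OF lets])
    finally show ?thesis .
  qed
  have em: "emeasure S.S (An n) \<le> ennreal (q ^ n)" for n
  proof -
    have "emeasure S.S (An n) = (\<integral>\<^sup>+\<omega>. indicator (An n) \<omega> \<partial>S.S)"
      using An_sets by simp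
    also have "\<dots> \<le> (\<integral>\<^sup>+\<omega>. ennreal (V A (stk lo [] \<omega> n)) * ennreal (1 / q ^ n) \<partial>S.S)"
    proof (rule nn_integral_mono)
      fix \<omega> assume "\<omega> \<in> space S.S"
      show "indicator (An n) \<omega> \<le> ennreal (V A (stk lo [] \<omega> n)) * ennreal (1 / q ^ n)"
      proof (cases "\<omega> \<in> An n")
        case True
        hence "q ^ n \<le> V A (stk lo [] \<omega> n)" using key by (auto simp: An_def)
        hence "1 \<le> V A (stk lo [] \<omega> n) * (1 / q ^ n)" using qpos by (simp add: field_simps)
        moreover have "V A (stk lo [] \<omega> n) \<ge> 0" using \<open>q ^ n \<le> _\<close> qpos
          by (meson order_trans zero_le_power less_imp_le)
        ultimately show ?thesis using True qpos by (simp add: ennreal_mult[symmetric] ennreal_leI)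
      qed simp
    qed
    also have "\<dots> = (\<integral>\<^sup>+\<omega>. ennreal (V A (stk lo [] \<omega> n)) \<partial>S.S) * ennreal (1 / q ^ n)"
      by (rule nn_integral_multc)
        (use measurable_compose[OF stk_meas[of lo "[]" n N], of "\<lambda>v. ennreal (V A v)" borel] in simp)
    also have "\<dots> \<le> ennreal (rho A ^ n * V A []) * ennreal (1 / q ^ n)"
      by (intro mult_right_mono expV) auto
    also have "\<dots> = ennreal (q ^ n)"
      using qpos by (simp add: V_def rq ennreal_mult[symmetric] field_simps)
    finally show ?thesis .
  qed
  have meas: "measure S.S (An n) \<le> q ^ n" for n
    using em[of n] qpos by (simp add: S.emeasure_eq_measure)
  have summ: "summable (\<lambda>n. measure S.S (An n))"
    by (rule summable_comparison_test'[where g = "\<lambda>n. q ^ n"])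
       (use meas qpos qlt1 in auto)
  have "AE \<omega> in S.S. eventually (\<lambda>n. \<omega> \<in> space S.S - An n) sequentially"
    by (rule borel_cantelli_AE1[OF An_sets _ summ]) (simp add: S.emeasure_eq_measure)
  hence "AE \<omega> in S.S. eventually (\<lambda>n. \<epsilon> * real n < real (length (stk lo [] \<omega> n))) sequentially"
    by (rule AE_mp) (auto simp: An_def elim!: eventually_mono)
  thus ?thesis using epos by blast
qed

end

lemma sq_rot_id: "(a * cc - b * ss)^2 + (a * ss + b * cc)^2 = (cc^2 + ss^2) * (a^2 + b^2)" for a b cc ss :: real
  by algebra


lemma norm_rot: "norm (rot t z) = norm z"
proof -
  obtain x y where z: "z = (x, y)" by (cases z)
  have c: "(cos t)^2 + (sin t)^2 = 1" by simp
  have "(cmod (complex_of_real (cos t) * x - complex_of_real (sin t) * y))^2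
      + (cmod (complex_of_real (sin t) * x + complex_of_real (cos t) * y))^2
      = ((cos t)^2 + (sin t)^2) * ((cmod x)^2 + (cmod y)^2)"
    apply (simp only: cmod_power2)
    apply (simp add: algebra_simps del: sin_cos_squared_add sin_cos_squared_add2 sin_cos_squared_add3)
    using sq_rot_id[of "Re x" "cos t" "Re y" "sin t"] sq_rot_id[of "Im x" "cos t" "Im y" "sin t"]
    apply (simp add: algebra_simps del: sin_cos_squared_add sin_cos_squared_add2 sin_cos_squared_add3)
    done
  thus ?thesis using c by (simp add: z rot_def norm_Pair)
qed

lemma rot_inv1: "rot (- t) (rot t z) = z"
proof -
  obtain x y where z: "z = (x, y)" by (cases z)
  define C where "C = complex_of_real (cos t)"
  define S where "S = complex_of_real (sin t)"
  have c: "C * C + S * S = 1" unfolding C_def S_def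
    by (metis of_real_add of_real_mult of_real_1 sin_cos_squared_add3)
  have e1: "C * (C * x - S * y) + S * (S * x + C * y) = (C * C + S * S) * x"
    by (simp add: algebra_simps)
  have e2: "- (S * (C * x - S * y)) + C * (S * x + C * y) = (C * C + S * S) * y"
    by (simp add: algebra_simps)
  show ?thesis using e1 e2 c by (simp add: z rot_def C_def S_def)
qed

lemma rot_inv2: "rot t (rot (- t) z) = z"
  using rot_inv1[of "-t" z] by simp

lemma henon_inv1: "d \<noteq> 0 \<Longrightarrow> henon_inv P d (henon P d z) = z"
  by (cases z) (simp add: henon_def henon_inv_def)

lemma henon_inv2: "d \<noteq> 0 \<Longrightarrow> henon P d (henon_inv P d z) = z"
  by (cases z) (simp add: henon_def henon_inv_def)

lemma gen_cancel: "d \<noteq> 0 \<Longrightarrow> i < 4 \<Longrightarrow> gen P d t (inv4 i) (gen P d t i z) = z"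
  by (auto simp: gen_def inv4_def rot_inv1 rot_inv2 henon_inv1 henon_inv2)

lemma poly_upper: "\<exists>B\<ge>0. \<forall>y. cmod (poly P y) \<le> B * max 1 (cmod y) ^ degree P"
proof (intro exI[of _ "\<Sum>k\<le>degree P. cmod (coeff P k)"] conjI allI)
  show "0 \<le> (\<Sum>k\<le>degree P. cmod (coeff P k))" by (simp add: sum_nonneg)
  fix y :: complex
  have "cmod (poly P y) = cmod (\<Sum>k\<le>degree P. coeff P k * y ^ k)" by (simp add: poly_altdef)
  also have "\<dots> \<le> (\<Sum>k\<le>degree P. cmod (coeff P k * y ^ k))" by (rule norm_sum)
  also have "\<dots> \<le> (\<Sum>k\<le>degree P. cmod (coeff P k) * max 1 (cmod y) ^ degree P)"
  proof (intro sum_mono)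
    fix k assume "k \<in> {..degree P}"
    hence "cmod y ^ k \<le> max 1 (cmod y) ^ degree P"
      by (meson atMost_iff max.cobounded1 max.cobounded2 norm_ge_zero order_trans power_increasing power_mono)
    thus "cmod (coeff P k * y ^ k) \<le> cmod (coeff P k) * max 1 (cmod y) ^ degree P"
      by (simp add: norm_mult norm_power mult_left_mono)
  qed
  also have "\<dots> = (\<Sum>k\<le>degree P. cmod (coeff P k)) * max 1 (cmod y) ^ degree P"
    by (simp add: sum_distrib_right)
  finally show "cmod (poly P y) \<le> (\<Sum>k\<le>degree P. cmod (coeff P k)) * max 1 (cmod y) ^ degree P" .
qed

lemma poly_nonzero_bound:
  fixes Q :: "complex poly"
  assumes "Q \<noteq> 0"
  shows "\<exists>c>0. \<exists>r. \<forall>y. r \<le> cmod y \<longrightarrow> c \<le> cmod (poly Q y)"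
proof (cases Q)
  case (pCons q0 Q2)
  show ?thesis
  proof (cases "Q2 = 0")
    case True
    hence "q0 \<noteq> 0" using assms pCons by auto
    thus ?thesis using pCons True by (intro exI[of _ "cmod q0"]) auto
  next
    case False
    from poly_infinity[OF False, of 1 q0] obtain r where
      r: "\<forall>z. r \<le> cmod z \<longrightarrow> 1 \<le> cmod (poly (pCons q0 Q2) z)" by blast
    show ?thesis using r pCons by (intro exI[of _ 1]) auto
  qed
qed

lemma poly_lower:
  fixes P :: "complex poly"
  assumes "degree P \<ge> 2"
  shows "\<exists>c>0. \<exists>r. \<forall>y. r \<le> cmod y \<longrightarrow> c * cmod y ^ 2 \<le> cmod (poly P y)"
proof -
  obtain a0 P1 where P1: "P = pCons a0 P1" by (cases P)
  obtain a1 Q where Q: "P1 = pCons a1 Q" by (cases P1)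
  have "Q \<noteq> 0" using assms P1 Q by (auto split: if_splits)
  then obtain c r where c: "c > 0" and r: "\<And>y. r \<le> cmod y \<Longrightarrow> c \<le> cmod (poly Q y)"
    using poly_nonzero_bound by blast
  define r' where "r' = max (max r 1) (4 * (cmod a0 + cmod a1) / c)"
  have "c / 2 * cmod y ^ 2 \<le> cmod (poly P y)" if y: "r' \<le> cmod y" for y
  proof -
    have y1: "cmod y \<ge> 1" and yr: "cmod y \<ge> r" and y4: "cmod y \<ge> 4 * (cmod a0 + cmod a1) / c"
      using y by (auto simp: r'_def)
    have pe: "poly P y = a0 + y * a1 + y^2 * poly Q y" by (simp add: P1 Q algebra_simps power2_eq_square)
    have "cmod (y^2 * poly Q y) \<ge> c * cmod y ^ 2" using r[OF yr] by (simp add: norm_mult norm_power mult.commute mult_right_mono)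
    moreover have "cmod (a0 + y * a1) \<le> cmod a0 + cmod y * cmod a1" by (metis norm_mult norm_triangle_ineq)
    moreover have "cmod a0 + cmod y * cmod a1 \<le> cmod y * (cmod a0 + cmod a1)"
      using mult_right_mono[OF y1, of "cmod a0"] by (simp add: algebra_simps)
    moreover have "cmod y * (cmod a0 + cmod a1) \<le> (c * cmod y ^ 2) / 4"
    proof -
      have "cmod a0 + cmod a1 \<le> c / 4 * cmod y" using y4 c by (simp add: field_simps)
      hence "cmod y * (cmod a0 + cmod a1) \<le> cmod y * (c / 4 * cmod y)" by (intro mult_left_mono) auto
      thus ?thesis by (simp add: power2_eq_square algebra_simps)
    qed
    moreover have "cmod (poly P y) \<ge> cmod (y^2 * poly Q y) - cmod (a0 + y * a1)"
      unfolding pe by (metis add.commute norm_diff_ineq)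
    ultimately have "cmod (poly P y) \<ge> (c * cmod y ^ 2) - (c * cmod y ^ 2) / 4" by linarith
    moreover have "c * cmod y ^ 2 \<ge> 0" using c by simp
    ultimately show ?thesis by simp
  qed
  thus ?thesis using c by (intro exI[of _ "c/2"]) auto
qed

lemma core_lower:
  fixes P :: "complex poly" and e :: complex and \<kappa> :: real
  assumes "degree P \<ge> 2" "\<kappa> > 0"
  shows "\<exists>k>0. \<exists>R. \<forall>a b. R \<le> norm (a, b) \<longrightarrow> \<kappa> * cmod a \<le> cmod b \<longrightarrow>
            k * (norm (a, b))^2 \<le> cmod (poly P b - e * a)"
proof -
  obtain c r where c: "c > 0" and hr: "\<And>y. r \<le> cmod y \<Longrightarrow> c * cmod y ^ 2 \<le> cmod (poly P y)"
    using poly_lower[OF assms(1)] by blast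
  define l where "l = \<kappa> / (1 + \<kappa>)"
  have l: "0 < l" using assms(2) by (simp add: l_def)
  define R where "R = max r (2 * cmod e / (c * \<kappa>)) / l"
  show ?thesis
  proof (rule exI[of _ "c * l^2 / 2"], intro conjI exI[of _ R] allI impI)
    show "0 < c * l^2 / 2" using c l by simp
    fix a b assume N: "R \<le> norm (a, b)" and ab: "\<kappa> * cmod a \<le> cmod b"
    have a_le: "cmod a \<le> cmod b / \<kappa>" using ab assms(2) by (simp add: field_simps)
    have "norm (a, b) \<le> cmod a + cmod b" by (rule norm_Pair_le)
    also have "\<dots> \<le> cmod b / \<kappa> + cmod b" using a_le by simp
    also have "\<dots> = cmod b / l" using assms(2) by (simp add: l_def field_simps)
    finally have bl: "l * norm (a, b) \<le> cmod b" using l by (simp add: field_simps)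
    have "max r (2 * cmod e / (c * \<kappa>)) = R * l" using l by (simp add: R_def)
    also have "\<dots> \<le> norm (a, b) * l" using N l by (simp add: mult_right_mono)
    finally have bR: "max r (2 * cmod e / (c * \<kappa>)) \<le> cmod b" using bl by (simp add: mult.commute)
    have hP: "c * cmod b ^ 2 \<le> cmod (poly P b)" using hr bR by simp
    have ea: "cmod (e * a) \<le> cmod e * (cmod b / \<kappa>)"
      using mult_left_mono[OF a_le, of "cmod e"] by (simp add: norm_mult)
    have b2: "2 * cmod e / (c * \<kappa>) \<le> cmod b" using bR by simp
    hence "2 * cmod e \<le> cmod b * (c * \<kappa>)" using c assms(2) by (simp add: field_simps)
    hence "2 * cmod e * cmod b \<le> cmod b * (c * \<kappa>) * cmod b" by (simp add: mult_right_mono)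
    hence eb: "cmod e * (cmod b / \<kappa>) \<le> c * cmod b ^ 2 / 2"
      using assms(2) by (simp add: field_simps power2_eq_square)
    have "cmod (poly P b - e * a) \<ge> cmod (poly P b) - cmod (e * a)" by (rule norm_triangle_ineq2)
    hence main: "cmod (poly P b - e * a) \<ge> c * cmod b ^ 2 / 2" using hP ea eb by linarith
    have "(l * norm (a, b))^2 \<le> cmod b ^ 2"
      using bl l by (intro power_mono) auto
    hence "c * (l * norm (a, b))^2 / 2 \<le> c * cmod b ^ 2 / 2" using c by simp
    thus "c * l^2 / 2 * (norm (a, b))^2 \<le> cmod (poly P b - e * a)"
      using main by (simp add: power_mult_distrib algebra_simps)
  qed
qed


lemma hg:
  fixes k \<kappa> N W :: real
  assumes "k > 0" "\<kappa> > 0" "N \<ge> 1 / (\<kappa> * k)" "N \<ge> 1 / k^2" "N \<ge> 1" "k * N^2 \<le> W"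
  shows "N \<le> \<kappa> * W" "N * sqrt N \<le> W"
proof -
  have o1: "1 \<le> \<kappa> * k * N" using assms(1-3) by (simp add: field_simps)
  have "N \<le> \<kappa> * k * N * N" using mult_right_mono[OF o1, of N] assms(5) by simp
  also have "\<dots> = \<kappa> * (k * N^2)" by (simp add: power2_eq_square algebra_simps)
  also have "\<dots> \<le> \<kappa> * W" using assms(2,6) by simp
  finally show "N \<le> \<kappa> * W" .
  have sN: "sqrt N \<ge> 1 / k"
  proof -
    have "sqrt N \<ge> sqrt (1 / k^2)" using assms(4) by simp
    thus ?thesis using assms(1) by (simp add: real_sqrt_divide)
  qed
  have o2: "1 \<le> k * sqrt N" using sN assms(1) by (simp add: field_simps)
  have "sqrt N \<le> k * sqrt N * sqrt N" using mult_right_mono[OF o2, of "sqrt N"] assms(5) by simp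
  also have "\<dots> = k * N" using assms(5) by (simp add: mult.assoc)
  finally have "sqrt N \<le> k * N" .
  hence "N * sqrt N \<le> N * (k * N)" using assms(5) by (intro mult_left_mono) auto
  also have "\<dots> = k * N^2" by (simp add: power2_eq_square algebra_simps)
  finally show "N * sqrt N \<le> W" using assms(6) by linarith
qed

definition D0 :: "real \<Rightarrow> complex \<times> complex \<Rightarrow> bool" where "D0 \<kappa> z = (\<kappa> * cmod (fst z) \<le> cmod (snd z))"
definition T0 :: "real \<Rightarrow> complex \<times> complex \<Rightarrow> bool" where "T0 \<kappa> z = (cmod (fst z) \<le> \<kappa> * cmod (snd z))"
definition D2 :: "real \<Rightarrow> complex \<times> complex \<Rightarrow> bool" where "D2 \<kappa> z = (\<kappa> * cmod (snd z) \<le> cmod (fst z))"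
definition T2 :: "real \<Rightarrow> complex \<times> complex \<Rightarrow> bool" where "T2 \<kappa> z = (cmod (snd z) \<le> \<kappa> * cmod (fst z))"

definition Dl :: "real \<Rightarrow> real \<Rightarrow> nat \<Rightarrow> complex \<times> complex \<Rightarrow> bool" where
  "Dl \<kappa> t j z = (if j = 0 then D0 \<kappa> z else if j = 1 then D0 \<kappa> (rot t z) else if j = 2 then D2 \<kappa> z else D2 \<kappa> (rot t z))"
definition Tl :: "real \<Rightarrow> real \<Rightarrow> nat \<Rightarrow> complex \<times> complex \<Rightarrow> bool" where
  "Tl \<kappa> t j z = (if j = 0 then T0 \<kappa> z else if j = 1 then T0 \<kappa> (rot t z) else if j = 2 then T2 \<kappa> z else T2 \<kappa> (rot t z))"

lemma grow_henon:
  fixes P :: "complex poly"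
  assumes "degree P \<ge> 2" "\<kappa> > 0"
  shows "\<exists>R\<ge>1. \<forall>z. R \<le> norm z \<longrightarrow> D0 \<kappa> z \<longrightarrow> T0 \<kappa> (henon P d z) \<and> norm z * sqrt (norm z) \<le> norm (henon P d z)"
proof -
  obtain k R0 where k: "k > 0" and hk: "\<And>a b. R0 \<le> norm (a, b) \<Longrightarrow> \<kappa> * cmod a \<le> cmod b \<Longrightarrow>
            k * (norm (a, b))^2 \<le> cmod (poly P b - d * a)"
    using core_lower[OF assms, of d] by blast
  define R where "R = max (max R0 1) (max (1 / (\<kappa> * k)) (1 / k^2))"
  show ?thesis
  proof (rule exI[of _ R], rule conjI[OF _ allI], simp add: R_def, intro allI impI)
    fix z :: "complex \<times> complex" assume N: "R \<le> norm z" and D: "D0 \<kappa> z"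
    obtain x y where z: "z = (x, y)" by (cases z)
    have W: "k * (norm z)^2 \<le> cmod (poly P y - d * x)" using hk[of x y] N D by (simp add: z D0_def R_def)
    have h1: "norm z \<le> \<kappa> * cmod (poly P y - d * x)" and h2: "norm z * sqrt (norm z) \<le> cmod (poly P y - d * x)"
      using hg[OF k assms(2) _ _ _ W] N by (auto simp: R_def)
    have "cmod y \<le> norm z" using norm_snd_le[of y x] by (simp add: z)
    hence "T0 \<kappa> (henon P d z)" using h1 by (simp add: T0_def henon_def z)
    moreover have "cmod (poly P y - d * x) \<le> norm (henon P d z)"
      using norm_snd_le by (simp add: henon_def z)
    ultimately show "T0 \<kappa> (henon P d z) \<and> norm z * sqrt (norm z) \<le> norm (henon P d z)"
      using h2 by auto
  qed
qed

lemma grow_henon_inv: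
  fixes P :: "complex poly"
  assumes "degree P \<ge> 2" "\<kappa> > 0" "d \<noteq> 0"
  shows "\<exists>R\<ge>1. \<forall>z. R \<le> norm z \<longrightarrow> D2 \<kappa> z \<longrightarrow> T2 \<kappa> (henon_inv P d z) \<and> norm z * sqrt (norm z) \<le> norm (henon_inv P d z)"
proof -
  obtain k R0 where k: "k > 0" and hk: "\<And>a b. R0 \<le> norm (a, b) \<Longrightarrow> \<kappa> * cmod a \<le> cmod b \<Longrightarrow>
            k * (norm (a, b))^2 \<le> cmod (poly P b - 1 * a)"
    using core_lower[OF assms(1,2), of 1] by blast
  define k' where "k' = k / cmod d"
  have k': "k' > 0" using k assms(3) by (simp add: k'_def)
  define R where "R = max (max R0 1) (max (1 / (\<kappa> * k')) (1 / k'^2))"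
  show ?thesis
  proof (rule exI[of _ R], rule conjI[OF _ allI], simp add: R_def, intro allI impI)
    fix z :: "complex \<times> complex" assume N: "R \<le> norm z" and D: "D2 \<kappa> z"
    obtain u v where z: "z = (u, v)" by (cases z)
    have nsym: "norm (v, u) = norm z" by (simp add: z norm_Pair add.commute)
    have W0: "k * (norm z)^2 \<le> cmod (poly P u - v)" using hk[of v u] N D nsym by (simp add: z D2_def R_def)
    have W: "k' * (norm z)^2 \<le> cmod ((poly P u - v) / d)"
      using W0 assms(3) by (simp add: k'_def norm_divide field_simps)
    have h1: "norm z \<le> \<kappa> * cmod ((poly P u - v) / d)" and h2: "norm z * sqrt (norm z) \<le> cmod ((poly P u - v) / d)"
      using hg[OF k' assms(2) _ _ _ W] N by (auto simp: R_def)
    have "cmod u \<le> norm z" using norm_fst_le[of u v] by (simp add: z)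
    hence "T2 \<kappa> (henon_inv P d z)" using h1 by (simp add: T2_def henon_inv_def z)
    moreover have "cmod ((poly P u - v) / d) \<le> norm (henon_inv P d z)"
      using norm_fst_le by (simp add: henon_inv_def z)
    ultimately show "T2 \<kappa> (henon_inv P d z) \<and> norm z * sqrt (norm z) \<le> norm (henon_inv P d z)"
      using h2 by auto
  qed
qed

lemma grow_all:
  fixes P :: "complex poly"
  assumes "degree P \<ge> 2" "\<kappa> > 0" "d \<noteq> 0"
  shows "\<exists>R\<ge>1. \<forall>j z. R \<le> norm z \<longrightarrow> Dl \<kappa> t j z \<longrightarrow>
      Tl \<kappa> t j (gen P d t j z) \<and> norm z * sqrt (norm z) \<le> norm (gen P d t j z)"
proof -
  obtain R1 where R1: "R1 \<ge> 1" and h1: "\<And>z. R1 \<le> norm z \<Longrightarrow> D0 \<kappa> z \<Longrightarrow> T0 \<kappa> (henon P d z) \<and> norm z * sqrt (norm z) \<le> norm (henon P d z)"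
    using grow_henon[OF assms(1,2), of d] by blast
  obtain R2 where R2: "R2 \<ge> 1" and h2: "\<And>z. R2 \<le> norm z \<Longrightarrow> D2 \<kappa> z \<Longrightarrow> T2 \<kappa> (henon_inv P d z) \<and> norm z * sqrt (norm z) \<le> norm (henon_inv P d z)"
    using grow_henon_inv[OF assms] by blast
  show ?thesis
  proof (rule exI[of _ "max R1 R2"], rule conjI[OF _ allI], use R1 in simp, intro allI impI)
    fix j z assume N: "max R1 R2 \<le> norm z" and D: "Dl \<kappa> t j z"
    have N1: "R1 \<le> norm z" "R1 \<le> norm (rot t z)" "R2 \<le> norm z" "R2 \<le> norm (rot t z)"
      using N by (auto simp: norm_rot)
    show "Tl \<kappa> t j (gen P d t j z) \<and> norm z * sqrt (norm z) \<le> norm (gen P d t j z)"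
    proof -
      consider "j = 0" | "j = 1" | "j = 2" | "j \<noteq> 0 \<and> j \<noteq> 1 \<and> j \<noteq> 2" by blast
      thus ?thesis
      proof cases
        case 1 thus ?thesis using h1[OF N1(1)] D by (simp add: Dl_def Tl_def gen_def)
      next
        case 2 thus ?thesis using h1[OF N1(2)] D by (simp add: Dl_def Tl_def gen_def rot_inv2 norm_rot)
      next
        case 3 thus ?thesis using h2[OF N1(3)] D by (simp add: Dl_def Tl_def gen_def)
      next
        case 4 thus ?thesis using h2[OF N1(4)] D by (simp add: Dl_def Tl_def gen_def rot_inv2 norm_rot)
      qed
    qed
  qed
qed

lemma sin_nz: assumes "0 < t" "t < 2 * pi" "t \<noteq> pi" shows "sin t \<noteq> 0"
proof
  assume "sin t = 0"
  then obtain i :: int where i: "t = of_int i * pi" by (auto simp: sin_zero_iff_int2)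
  have "0 < of_int i * pi" using assms i by simp
  hence "0 < i" by (simp add: zero_less_mult_iff)
  moreover have "of_int i * pi < 2 * pi" using assms i by simp
  hence "i < 2" by simp
  ultimately have "i = 1" by simp
  thus False using i assms by simp
qed

lemma cos_nz: assumes "0 < t" "t < 2 * pi" "t \<noteq> pi / 2" "t \<noteq> 3 * pi / 2" shows "cos t \<noteq> 0"
proof
  assume "cos t = 0"
  then obtain n :: int where n: "t = of_int n * pi + pi / 2" by (auto simp: cos_zero_iff_int2)
  have "0 < (of_int n + 1/2) * pi" using assms n by (simp add: algebra_simps)
  hence "0 < of_int n + (1/2::real)" by (simp add: zero_less_mult_iff)
  hence "n \<ge> 0" by linarith
  moreover have "(of_int n + 1/2) * pi < 2 * pi" using assms n by (simp add: algebra_simps)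
  hence "of_int n + (1/2::real) < 2" by simp
  hence "n \<le> 1" by linarith
  ultimately have "n = 0 \<or> n = 1" by auto
  thus False using n assms by (auto simp: algebra_simps)
qed

lemma lin_bounds:
  fixes \<alpha> \<beta> m \<kappa> :: real and p q :: complex
  assumes "\<bar>\<alpha>\<bar> \<le> 1" "m \<le> \<bar>\<beta>\<bar>" "\<bar>\<beta>\<bar> \<le> 1" "cmod p \<le> \<kappa> * cmod q"
  shows "(m - \<kappa>) * cmod q \<le> cmod (of_real \<alpha> * p + of_real \<beta> * q)"
    and "cmod (of_real \<alpha> * p + of_real \<beta> * q) \<le> (\<kappa> + 1) * cmod q"
proof -
  have ap: "cmod (of_real \<alpha> * p) \<le> \<kappa> * cmod q"
  proof -
    have "cmod (of_real \<alpha> * p) = \<bar>\<alpha>\<bar> * cmod p" by (simp add: norm_mult)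
    also have "\<dots> \<le> 1 * cmod p" using assms(1) by (intro mult_right_mono) auto
    finally show ?thesis using assms(4) by simp
  qed
  have bq1: "m * cmod q \<le> cmod (of_real \<beta> * q)" using assms(2) by (simp add: norm_mult mult_right_mono)
  have bq2: "cmod (of_real \<beta> * q) \<le> cmod q" using mult_right_mono[OF assms(3), of "cmod q"] by (simp add: norm_mult)
  have "cmod (of_real \<beta> * q) - cmod (of_real \<alpha> * p) \<le> cmod (of_real \<alpha> * p + of_real \<beta> * q)"
    by (metis add.commute norm_diff_ineq)
  thus "(m - \<kappa>) * cmod q \<le> cmod (of_real \<alpha> * p + of_real \<beta> * q)" using ap bq1 by (simp add: algebra_simps)
  have "cmod (of_real \<alpha> * p + of_real \<beta> * q) \<le> cmod (of_real \<alpha> * p) + cmod (of_real \<beta> * q)"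
    by (rule norm_triangle_ineq)
  thus "cmod (of_real \<alpha> * p + of_real \<beta> * q) \<le> (\<kappa> + 1) * cmod q" using ap bq2 by (simp add: algebra_simps)
qed

lemma strict_help:
  fixes m \<kappa> a b Q :: real
  assumes "\<kappa> > 0" "\<kappa> * (\<kappa> + 2) < m" "Q > 0" "(m - \<kappa>) * Q \<le> a" "b \<le> (\<kappa> + 1) * Q"
  shows "\<kappa> * b < a"
proof -
  have "\<kappa> * b \<le> \<kappa> * ((\<kappa> + 1) * Q)" using assms(1,5) by simp
  also have "\<dots> < (m - \<kappa>) * Q"
  proof -
    have h: "\<kappa> * (\<kappa> + 1) < m - \<kappa>" using assms(2) by (simp add: algebra_simps)
    have "\<kappa> * ((\<kappa> + 1) * Q) = (\<kappa> * (\<kappa> + 1)) * Q" by (simp add: mult.assoc)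
    also have "\<dots> < (m - \<kappa>) * Q" by (rule mult_strict_right_mono[OF h assms(3)])
    finally show ?thesis .
  qed
  finally show ?thesis using assms(4) by simp
qed

lemma base_cone:
  fixes \<theta> m \<kappa> :: real and z :: "complex \<times> complex"
  assumes "m \<le> \<bar>cos \<theta>\<bar>" "m \<le> \<bar>sin \<theta>\<bar>" "\<kappa> > 0" "\<kappa> * (\<kappa> + 2) < m" "\<kappa> < 1" "z \<noteq> 0"
  shows "T0 \<kappa> z \<Longrightarrow> D0 \<kappa> z \<and> D0 \<kappa> (rot \<theta> z) \<and> D2 \<kappa> (rot \<theta> z) \<and> \<not> T0 \<kappa> (rot \<theta> z) \<and> \<not> T2 \<kappa> (rot \<theta> z) \<and> \<not> T2 \<kappa> z"
    and "T2 \<kappa> z \<Longrightarrow> D2 \<kappa> z \<and> D0 \<kappa> (rot \<theta> z) \<and> D2 \<kappa> (rot \<theta> z) \<and> \<not> T0 \<kappa> (rot \<theta> z) \<and> \<not> T2 \<kappa> (rot \<theta> z) \<and> \<not> T0 \<kappa> z"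
proof -
  obtain x y where z: "z = (x, y)" by (cases z)
  have kk: "\<kappa> * \<kappa> \<le> 1" using assms(3,5) mult_strict_mono[of \<kappa> 1 \<kappa> 1] by simp
  have c1: "\<bar>cos \<theta>\<bar> \<le> 1" "\<bar>sin \<theta>\<bar> \<le> 1" "\<bar>- sin \<theta>\<bar> \<le> 1" "m \<le> \<bar>- sin \<theta>\<bar>" using assms by auto
  have X: "fst (rot \<theta> z) = of_real (cos \<theta>) * x + of_real (- sin \<theta>) * y" by (simp add: rot_def z)
  have X': "fst (rot \<theta> z) = of_real (- sin \<theta>) * y + of_real (cos \<theta>) * x" by (simp add: rot_def z)
  have Y: "snd (rot \<theta> z) = of_real (sin \<theta>) * x + of_real (cos \<theta>) * y" by (simp add: rot_def z)
  have Y': "snd (rot \<theta> z) = of_real (cos \<theta>) * y + of_real (sin \<theta>) * x" by (simp add: rot_def z)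
  have TT: "\<not> (T0 \<kappa> z \<and> T2 \<kappa> z)"
  proof
    assume h: "T0 \<kappa> z \<and> T2 \<kappa> z"
    hence "cmod x \<le> \<kappa> * (\<kappa> * cmod x)" using assms(3) by (auto simp: T0_def T2_def z intro: order_trans mult_left_mono)
    hence "cmod x * (1 - \<kappa> * \<kappa>) \<le> 0" by (simp add: algebra_simps)
    moreover have "1 - \<kappa> * \<kappa> > 0" using assms(3,5) mult_strict_mono[of \<kappa> 1 \<kappa> 1] by simp
    ultimately have "cmod x \<le> 0" by (simp add: mult_le_0_iff)
    hence "x = 0" by simp
    with h have "y = 0" using assms(3) by (auto simp: T2_def z)
    with \<open>x = 0\<close> show False using assms(6) z by (simp add: zero_prod_def)
  qed
  show "T0 \<kappa> z \<Longrightarrow> D0 \<kappa> z \<and> D0 \<kappa> (rot \<theta> z) \<and> D2 \<kappa> (rot \<theta> z) \<and> \<not> T0 \<kappa> (rot \<theta> z) \<and> \<not> T2 \<kappa> (rot \<theta> z) \<and> \<not> T2 \<kappa> z"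
  proof -
    assume T: "T0 \<kappa> z"
    hence xy: "cmod x \<le> \<kappa> * cmod y" by (simp add: T0_def z)
    have ynz: "cmod y > 0"
    proof (rule ccontr)
      assume "\<not> cmod y > 0" hence "y = 0" by simp
      with xy have "x = 0" by simp
      with \<open>y = 0\<close> show False using assms(6) z by (simp add: zero_prod_def)
    qed
    have Xb: "(m - \<kappa>) * cmod y \<le> cmod (fst (rot \<theta> z))" "cmod (fst (rot \<theta> z)) \<le> (\<kappa> + 1) * cmod y"
      using lin_bounds[OF c1(1) c1(4) c1(3) xy] by (simp_all add: X)
    have Yb: "(m - \<kappa>) * cmod y \<le> cmod (snd (rot \<theta> z))" "cmod (snd (rot \<theta> z)) \<le> (\<kappa> + 1) * cmod y"
      using lin_bounds[OF c1(2) assms(1) c1(1) xy] by (simp_all add: Y)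
    have s1: "\<kappa> * cmod (fst (rot \<theta> z)) < cmod (snd (rot \<theta> z))"
      by (rule strict_help[OF assms(3,4) ynz Yb(1) Xb(2)])
    have s2: "\<kappa> * cmod (snd (rot \<theta> z)) < cmod (fst (rot \<theta> z))"
      by (rule strict_help[OF assms(3,4) ynz Xb(1) Yb(2)])
    have "D0 \<kappa> z"
    proof -
      have "\<kappa> * cmod x \<le> \<kappa> * (\<kappa> * cmod y)" using xy assms(3) by simp
      also have "\<dots> \<le> 1 * cmod y" using mult_right_mono[OF kk, of "cmod y"] by (simp add: mult.assoc)
      finally show ?thesis by (simp add: D0_def z)
    qed
    thus ?thesis using s1 s2 T TT by (auto simp: D0_def D2_def T0_def T2_def)
  qed
  show "T2 \<kappa> z \<Longrightarrow> D2 \<kappa> z \<and> D0 \<kappa> (rot \<theta> z) \<and> D2 \<kappa> (rot \<theta> z) \<and> \<not> T0 \<kappa> (rot \<theta> z) \<and> \<not> T2 \<kappa> (rot \<theta> z) \<and> \<not> T0 \<kappa> z"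
  proof -
    assume T: "T2 \<kappa> z"
    hence xy: "cmod y \<le> \<kappa> * cmod x" by (simp add: T2_def z)
    have xnz: "cmod x > 0"
    proof (rule ccontr)
      assume "\<not> cmod x > 0" hence "x = 0" by simp
      with xy have "y = 0" by simp
      with \<open>x = 0\<close> show False using assms(6) z by (simp add: zero_prod_def)
    qed
    have Xb: "(m - \<kappa>) * cmod x \<le> cmod (fst (rot \<theta> z))" "cmod (fst (rot \<theta> z)) \<le> (\<kappa> + 1) * cmod x"
      using lin_bounds[OF c1(3) assms(1) c1(1) xy] by (simp_all add: X')
    have Yb: "(m - \<kappa>) * cmod x \<le> cmod (snd (rot \<theta> z))" "cmod (snd (rot \<theta> z)) \<le> (\<kappa> + 1) * cmod x"
      using lin_bounds[OF c1(1) assms(2) c1(2) xy] by (simp_all add: Y')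
    have s1: "\<kappa> * cmod (fst (rot \<theta> z)) < cmod (snd (rot \<theta> z))"
      by (rule strict_help[OF assms(3,4) xnz Yb(1) Xb(2)])
    have s2: "\<kappa> * cmod (snd (rot \<theta> z)) < cmod (fst (rot \<theta> z))"
      by (rule strict_help[OF assms(3,4) xnz Xb(1) Yb(2)])
    have "D2 \<kappa> z"
    proof -
      have "\<kappa> * cmod y \<le> \<kappa> * (\<kappa> * cmod x)" using xy assms(3) by simp
      also have "\<dots> \<le> 1 * cmod x" using mult_right_mono[OF kk, of "cmod x"] by (simp add: mult.assoc)
      finally show ?thesis by (simp add: D2_def z)
    qed
    thus ?thesis using s1 s2 T TT by (auto simp: D0_def D2_def T0_def T2_def)
  qed
qed

lemma letter_facts:
  fixes m \<kappa> t :: real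
  assumes "m \<le> \<bar>cos t\<bar>" "m \<le> \<bar>sin t\<bar>" "\<kappa> > 0" "\<kappa> * (\<kappa> + 2) < m" "\<kappa> < 1"
  shows contain: "j < 4 \<Longrightarrow> k < 4 \<Longrightarrow> j \<noteq> inv4 k \<Longrightarrow> z \<noteq> 0 \<Longrightarrow> Tl \<kappa> t k z \<Longrightarrow> Dl \<kappa> t j z"
    and disj: "i < 4 \<Longrightarrow> j < 4 \<Longrightarrow> z \<noteq> 0 \<Longrightarrow> Tl \<kappa> t i z \<Longrightarrow> Tl \<kappa> t j z \<Longrightarrow> i = j"
proof -
  have a': "m \<le> \<bar>cos (- t)\<bar>" "m \<le> \<bar>sin (- t)\<bar>" using assms by auto
  {
    assume z: "z \<noteq> 0"
    have w: "rot t z \<noteq> 0" using z norm_rot[of t z] by (metis norm_eq_zero)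
    have zz: "rot (- t) (rot t z) = z" by (rule rot_inv1)
    note F0 = base_cone(1)[OF assms(1,2,3,4,5) z]
    note F2 = base_cone(2)[OF assms(1,2,3,4,5) z]
    note G0 = base_cone(1)[OF a' assms(3,4,5) w, unfolded zz]
    note G2 = base_cone(2)[OF a' assms(3,4,5) w, unfolded zz]
    note FF = F0 F2 G0 G2
  } note facts = this
  show "j < 4 \<Longrightarrow> k < 4 \<Longrightarrow> j \<noteq> inv4 k \<Longrightarrow> z \<noteq> 0 \<Longrightarrow> Tl \<kappa> t k z \<Longrightarrow> Dl \<kappa> t j z"
  proof -
    assume j: "j < 4" and k: "k < 4" and jk: "j \<noteq> inv4 k" and z: "z \<noteq> 0" and T: "Tl \<kappa> t k z"
    note FF = facts[OF z]
    have "k = 0 \<or> k = 1 \<or> k = 2 \<or> k = 3" using k by auto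
    thus ?thesis
    proof (elim disjE)
      assume k0: "k = 0"
      have "T0 \<kappa> z" using T k0 by (simp add: Tl_def)
      hence "D0 \<kappa> z \<and> D0 \<kappa> (rot t z) \<and> D2 \<kappa> (rot t z)" using FF(1) by blast
      thus ?thesis using jk k0 j by (simp add: Dl_def inv4_def)
    next
      assume k0: "k = 1"
      have "T0 \<kappa> (rot t z)" using T k0 by (simp add: Tl_def)
      hence "D0 \<kappa> (rot t z) \<and> D0 \<kappa> z \<and> D2 \<kappa> z" using FF(3) by blast
      thus ?thesis using jk k0 j by (simp add: Dl_def inv4_def)
    next
      assume k0: "k = 2"
      have "T2 \<kappa> z" using T k0 by (simp add: Tl_def)
      hence "D2 \<kappa> z \<and> D0 \<kappa> (rot t z) \<and> D2 \<kappa> (rot t z)" using FF(2) by blast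
      thus ?thesis using jk k0 j by (simp add: Dl_def inv4_def)
    next
      assume k0: "k = 3"
      have "T2 \<kappa> (rot t z)" using T k0 by (simp add: Tl_def)
      hence "D2 \<kappa> (rot t z) \<and> D0 \<kappa> z \<and> D2 \<kappa> z" using FF(4) by blast
      thus ?thesis using jk k0 j by (simp add: Dl_def inv4_def)
    qed
  qed
  show "i < 4 \<Longrightarrow> j < 4 \<Longrightarrow> z \<noteq> 0 \<Longrightarrow> Tl \<kappa> t i z \<Longrightarrow> Tl \<kappa> t j z \<Longrightarrow> i = j"
  proof -
    assume i: "i < 4" and j: "j < 4" and z: "z \<noteq> 0" and Ti: "Tl \<kappa> t i z" and Tj: "Tl \<kappa> t j z"
    note FF = facts[OF z]
    have X: "Tl \<kappa> t i z \<Longrightarrow> i < 4 \<Longrightarrow> (i = 0 \<and> T0 \<kappa> z \<and> \<not> T2 \<kappa> z \<and> \<not> T0 \<kappa> (rot t z) \<and> \<not> T2 \<kappa> (rot t z))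
        \<or> (i = 1 \<and> T0 \<kappa> (rot t z) \<and> \<not> T2 \<kappa> z \<and> \<not> T0 \<kappa> z \<and> \<not> T2 \<kappa> (rot t z))
        \<or> (i = 2 \<and> T2 \<kappa> z \<and> \<not> T0 \<kappa> z \<and> \<not> T0 \<kappa> (rot t z) \<and> \<not> T2 \<kappa> (rot t z))
        \<or> (i = 3 \<and> T2 \<kappa> (rot t z) \<and> \<not> T2 \<kappa> z \<and> \<not> T0 \<kappa> z \<and> \<not> T0 \<kappa> (rot t z))" for i
    proof -
      assume Ti: "Tl \<kappa> t i z" and i: "i < 4"
      have "i = 0 \<or> i = 1 \<or> i = 2 \<or> i = 3" using i by auto
      thus ?thesis
      proof (elim disjE)
        assume "i = 0" thus ?thesis using Ti FF(1) by (simp add: Tl_def)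
      next
        assume "i = 1" thus ?thesis using Ti FF(3) by (simp add: Tl_def)
      next
        assume "i = 2" thus ?thesis using Ti FF(2) by (simp add: Tl_def)
      next
        assume "i = 3" thus ?thesis using Ti FF(4) by (simp add: Tl_def)
      qed
    qed
    show ?thesis using X[OF Ti i] X[OF Tj j] by auto
  qed
qed

fun red :: "nat list \<Rightarrow> bool" where
  "red [] = True"
| "red [a] = (a < 4)"
| "red (a # b # r) = (a < 4 \<and> a \<noteq> inv4 b \<and> red (b # r))"

lemma red_tl: "red (a # r) \<Longrightarrow> red r"
  by (cases r) auto

lemma red_hd: "red (a # r) \<Longrightarrow> a < 4"
  by (cases r) auto

lemma word_eval_Cons: "word_eval P d t (j # r) = gen P d t j \<circ> word_eval P d t r"
  by (simp add: word_eval_def)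

lemma word_eval_Nil: "word_eval P d t [] = id"
  by (simp add: word_eval_def)

lemma pingpong:
  assumes R1: "R \<ge> 1"
    and grow: "\<And>j z. R \<le> norm z \<Longrightarrow> Dl \<kappa> t j z \<Longrightarrow> Tl \<kappa> t j (gen P d t j z) \<and> norm z * sqrt (norm z) \<le> norm (gen P d t j z)"
    and contain: "\<And>j k z. j < 4 \<Longrightarrow> k < 4 \<Longrightarrow> j \<noteq> inv4 k \<Longrightarrow> z \<noteq> 0 \<Longrightarrow> Tl \<kappa> t k z \<Longrightarrow> Dl \<kappa> t j z"
    and p: "R \<le> norm p" "\<And>j. Dl \<kappa> t j p"
  shows "red w \<Longrightarrow> R \<le> norm (word_eval P d t w p) \<and> (3/2) ^ length w * ln (norm p) \<le> ln (norm (word_eval P d t w p))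
          \<and> (w \<noteq> [] \<longrightarrow> Tl \<kappa> t (hd w) (word_eval P d t w p))"
proof (induction w)
  case Nil thus ?case using p by (simp add: word_eval_Nil)
next
  case (Cons j r)
  let ?z = "word_eval P d t r p"
  have IH: "R \<le> norm ?z" "(3/2) ^ length r * ln (norm p) \<le> ln (norm ?z)" "r \<noteq> [] \<longrightarrow> Tl \<kappa> t (hd r) ?z"
    using Cons.IH[OF red_tl[OF Cons.prems]] by auto
  have Dj: "Dl \<kappa> t j ?z"
  proof (cases r)
    case Nil thus ?thesis using p by (simp add: word_eval_Nil)
  next
    case (Cons k r')
    have "j < 4" "j \<noteq> inv4 k" "k < 4" using Cons.prems \<open>r = k # r'\<close> red_hd[of k r'] by auto
    moreover have "?z \<noteq> 0" using IH(1) R1 by auto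
    ultimately show ?thesis using contain IH(3) \<open>r = k # r'\<close> by auto
  qed
  obtain T G where TG: "Tl \<kappa> t j (gen P d t j ?z)" "norm ?z * sqrt (norm ?z) \<le> norm (gen P d t j ?z)"
    using grow[OF IH(1) Dj] by blast
  have N1: "norm ?z \<ge> 1" using IH(1) R1 by simp
  have "norm ?z \<le> norm ?z * sqrt (norm ?z)" using N1 by (simp add: mult_le_cancel_left1)
  hence R': "R \<le> norm (gen P d t j ?z)" using IH(1) TG(2) by linarith
  have "ln (norm (gen P d t j ?z)) \<ge> ln (norm ?z * sqrt (norm ?z))"
  proof -
    have pos: "0 < norm ?z * sqrt (norm ?z)" using N1 by (intro mult_pos_pos) auto
    thus ?thesis using TG(2) by (subst ln_le_cancel_iff) auto
  qed
  also have "ln (norm ?z * sqrt (norm ?z)) = 3/2 * ln (norm ?z)"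
    using N1 by (simp add: ln_mult ln_sqrt)
  finally have "3/2 * ln (norm ?z) \<le> ln (norm (gen P d t j ?z))" .
  moreover have "3/2 * ((3/2) ^ length r * ln (norm p)) \<le> 3/2 * ln (norm ?z)" using IH(2) by (intro mult_left_mono) auto
  ultimately have "(3/2) ^ length (j # r) * ln (norm p) \<le> ln (norm (gen P d t j ?z))" by (simp add: algebra_simps)
  thus ?case using R' TG(1) by (simp add: word_eval_Cons)
qed

lemma ub_map:
  fixes h :: "complex \<times> complex \<Rightarrow> complex \<times> complex"
  assumes "norm (h z) \<le> C * (max (norm z) K) ^ n" "C \<le> K" "K \<ge> 1" "n \<ge> 1"
  shows "max (norm (h z)) K \<le> (max (norm z) K) ^ (n + 1)"
proof -
  let ?M = "max (norm z) K"
  have M1: "?M \<ge> 1" using assms(3) by simp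
  have Mn: "0 \<le> ?M ^ n" using M1 by simp
  have "norm (h z) \<le> K * ?M ^ n" using assms(1,2) Mn by (meson mult_right_mono order_trans)
  also have "\<dots> \<le> ?M * ?M ^ n" using Mn by (intro mult_right_mono) auto
  finally have 1: "norm (h z) \<le> ?M ^ (n + 1)" by simp
  have "K \<le> ?M" by simp
  also have "?M \<le> ?M ^ (n + 1)" using M1 by (metis power_increasing_iff one_le_power power_one_right le_add2 linorder_not_le
      order_less_le_trans power_increasing)
  finally show ?thesis using 1 by simp
qed

lemma ub_gen:
  fixes P :: "complex poly"
  assumes "degree P \<ge> 2" "d \<noteq> 0"
  shows "\<exists>K\<ge>3. \<forall>i z. max (norm (gen P d t i z)) K \<le> (max (norm z) K) ^ (degree P + 1)"
proof -
  obtain B where B: "B \<ge> 0" "\<And>y. cmod (poly P y) \<le> B * max 1 (cmod y) ^ degree P"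
    using poly_upper by blast
  define n where "n = degree P"
  have n1: "n \<ge> 1" using assms by (simp add: n_def)
  define K where "K = max 3 (max (1 + B + cmod d) ((B + 1) / cmod d + 1))"
  have K1: "K \<ge> 1" by (simp add: K_def)
  have Mge: "cmod a \<le> max (norm z) K ^ n" if "cmod a \<le> norm z" for a z
  proof -
    have "cmod a \<le> max (norm z) K" using that by simp
    also have "\<dots> \<le> max (norm z) K ^ n" using K1 n1
      by (metis le_max_iff_disj order_trans one_le_power power_increasing power_one_right)
    finally show ?thesis .
  qed
  have Pb: "cmod (poly P a) \<le> B * max (norm z) K ^ n" if "cmod a \<le> norm z" for a z
  proof -
    have "max 1 (cmod a) \<le> max (norm z) K" using that K1 by auto
    hence "max 1 (cmod a) ^ n \<le> max (norm z) K ^ n" by (intro power_mono) auto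
    thus ?thesis using B(2)[of a] B(1) unfolding n_def by (meson mult_left_mono order_trans)
  qed
  have hb: "norm (henon P d z) \<le> (1 + B + cmod d) * (max (norm z) K) ^ n" for z
  proof -
    obtain x y where z: "z = (x, y)" by (cases z)
    have xz: "cmod x \<le> norm z" and yz: "cmod y \<le> norm z" using norm_fst_le norm_snd_le z by metis+
    have "norm (henon P d z) \<le> cmod y + cmod (poly P y - d * x)"
      using norm_Pair_le by (simp add: henon_def z)
    also have "\<dots> \<le> cmod y + (cmod (poly P y) + cmod d * cmod x)"
      using norm_triangle_ineq4[of "poly P y" "d * x"] by (simp add: norm_mult)
    also have "\<dots> \<le> max (norm z) K ^ n + (B * max (norm z) K ^ n + cmod d * max (norm z) K ^ n)"
      using Mge[OF yz] Pb[OF yz] mult_left_mono[OF Mge[OF xz], of "cmod d"] by simp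
    also have "\<dots> = (1 + B + cmod d) * (max (norm z) K) ^ n" by (simp add: algebra_simps)
    finally show ?thesis .
  qed
  have hib: "norm (henon_inv P d z) \<le> ((B + 1) / cmod d + 1) * (max (norm z) K) ^ n" for z
  proof -
    obtain u v where z: "z = (u, v)" by (cases z)
    have uz: "cmod u \<le> norm z" and vz: "cmod v \<le> norm z" using norm_fst_le norm_snd_le z by metis+
    have "norm (henon_inv P d z) \<le> cmod ((poly P u - v) / d) + cmod u"
      using norm_Pair_le by (simp add: henon_inv_def z)
    also have "cmod ((poly P u - v) / d) \<le> (cmod (poly P u) + cmod v) / cmod d"
      using assms(2) norm_triangle_ineq4[of "poly P u" v] by (simp add: norm_divide divide_right_mono)
    also have "(cmod (poly P u) + cmod v) / cmod d \<le> (B * max (norm z) K ^ n + max (norm z) K ^ n) / cmod d"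
      using Pb[OF uz] Mge[OF vz] assms(2) by (intro divide_right_mono) auto
    also have "(B * max (norm z) K ^ n + max (norm z) K ^ n) / cmod d + cmod u
        \<le> (B * max (norm z) K ^ n + max (norm z) K ^ n) / cmod d + max (norm z) K ^ n"
      using Mge[OF uz] by simp
    also have "\<dots> = ((B + 1) / cmod d + 1) * (max (norm z) K) ^ n" by (simp add: algebra_simps add_divide_distrib)
    finally show ?thesis by simp
  qed
  have u0: "max (norm (henon P d z)) K \<le> (max (norm z) K) ^ (n + 1)" for z
    by (rule ub_map[OF hb]) (use n1 in \<open>auto simp: K_def\<close>)
  have u2: "max (norm (henon_inv P d z)) K \<le> (max (norm z) K) ^ (n + 1)" for z
    by (rule ub_map[OF hib]) (use n1 in \<open>auto simp: K_def\<close>)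
  show ?thesis
  proof (rule exI[of _ K], rule conjI[OF _ allI], simp add: K_def, intro allI)
    fix i z
    show "max (norm (gen P d t i z)) K \<le> (max (norm z) K) ^ (degree P + 1)"
      using u0[of z] u2[of z] u0[of "rot t z"] u2[of "rot t z"]
      by (auto simp: gen_def norm_rot n_def)
  qed
qed

lemma ub_word:
  assumes "K \<ge> 1" "\<And>i z. max (norm (gen P d t i z)) K \<le> (max (norm z) K) ^ D"
  shows "max (norm (word_eval P d t u z)) K \<le> (max (norm z) K) ^ (D ^ length u)"
proof (induction u)
  case Nil thus ?case by (simp add: word_eval_Nil)
next
  case (Cons i u)
  have "max (norm (word_eval P d t (i # u) z)) K \<le> (max (norm (word_eval P d t u z)) K) ^ D"
    using assms(2) by (simp add: word_eval_Cons)
  also have "\<dots> \<le> ((max (norm z) K) ^ (D ^ length u)) ^ D"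
    using Cons.IH assms(1) by (intro power_mono) auto
  also have "\<dots> = (max (norm z) K) ^ (D ^ length (i # u))"
    by (simp add: power_mult[symmetric] mult.commute)
  finally show ?case .
qed

lemma cmod_rot_comp:
  fixes c s r :: real
  assumes "c^2 + s^2 = 1" "r \<ge> 0"
  shows "cmod (of_real c * of_real r - of_real s * (\<i> * of_real r)) = r"
    and "cmod (of_real s * of_real r + of_real c * (\<i> * of_real r)) = r"
proof -
  have e1: "of_real c * of_real r - of_real s * (\<i> * of_real r) = Complex (c * r) (- (s * r))"
    by (simp add: complex_eq_iff)
  have e2: "of_real s * of_real r + of_real c * (\<i> * of_real r) = Complex (s * r) (c * r)"
    by (simp add: complex_eq_iff)
  have q1': "(c * r)^2 + (- (s * r))^2 = (c^2 + s^2) * r^2" by (simp add: power_mult_distrib algebra_simps)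
  have q1: "(c * r)^2 + (- (s * r))^2 = r^2" using q1' assms(1) by simp
  have q2': "(s * r)^2 + (c * r)^2 = (c^2 + s^2) * r^2" by (simp add: power_mult_distrib algebra_simps)
  have q2: "(s * r)^2 + (c * r)^2 = r^2" using q2' assms(1) by simp
  show "cmod (of_real c * of_real r - of_real s * (\<i> * of_real r)) = r"
    unfolding e1 complex_norm q1 using assms(2) by simp
  show "cmod (of_real s * of_real r + of_real c * (\<i> * of_real r)) = r"
    unfolding e2 complex_norm q2 using assms(2) by simp
qed

theorem geo:
  fixes P :: "complex poly" and d :: complex and t :: real
  assumes deg: "degree P \<ge> 2" and d: "d \<noteq> 0"
    and t: "0 < t" "t < 2 * pi" "t \<noteq> pi / 2" "t \<noteq> pi" "t \<noteq> 3 * pi / 2"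
  shows "\<exists>c0>0. \<forall>w u. red w \<longrightarrow> word_eval P d t u = word_eval P d t w \<longrightarrow> c0 * real (length w) \<le> real (length u)"
    and "\<forall>i j. i < 4 \<longrightarrow> j < 4 \<longrightarrow> gen P d t i = gen P d t j \<longrightarrow> i = j"
proof -
  define m where "m = min \<bar>cos t\<bar> \<bar>sin t\<bar>"
  have m0: "m > 0" using cos_nz[OF t(1,2,3,5)] sin_nz[OF t(1,2,4)] by (simp add: m_def)
  have m1: "m \<le> 1" by (simp add: m_def min_le_iff_disj)
  define \<kappa> where "\<kappa> = m / 4"
  have k0: "\<kappa> > 0" and k1: "\<kappa> < 1" using m0 m1 by (auto simp: \<kappa>_def)
  have kk: "\<kappa> * (\<kappa> + 2) < m"
  proof -
    have "\<kappa> + 2 \<le> 9/4" using m1 by (simp add: \<kappa>_def)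
    hence "\<kappa> * (\<kappa> + 2) \<le> \<kappa> * (9/4)" using k0 by (intro mult_left_mono) auto
    also have "\<dots> < m" using m0 by (simp add: \<kappa>_def)
    finally show ?thesis .
  qed
  have mc: "m \<le> \<bar>cos t\<bar>" "m \<le> \<bar>sin t\<bar>" by (auto simp: m_def)
  note LF = letter_facts[OF mc k0 kk k1]
  obtain R where R1: "R \<ge> 1" and grow: "\<And>j z. R \<le> norm z \<Longrightarrow> Dl \<kappa> t j z \<Longrightarrow>
      Tl \<kappa> t j (gen P d t j z) \<and> norm z * sqrt (norm z) \<le> norm (gen P d t j z)"
    using grow_all[OF deg k0 d, of t] by blast
  obtain K where K3: "K \<ge> 3" and ub: "\<And>i z. max (norm (gen P d t i z)) K \<le> (max (norm z) K) ^ (degree P + 1)"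
    using ub_gen[OF deg d, of t] by blast
  define r where "r = max R K"
  have r0: "r \<ge> 0" "r \<ge> R" "r \<ge> K" using R1 by (auto simp: r_def)
  define p where "p = (complex_of_real r, \<i> * complex_of_real r)"
  have np: "r \<le> norm p" using norm_fst_le[of "complex_of_real r" "\<i> * complex_of_real r"] r0
    by (simp add: p_def)
  have pR: "R \<le> norm p" and pK: "K \<le> norm p" using np r0 by auto
  have sc: "(cos t)^2 + (sin t)^2 = 1" by simp
  have rp: "cmod (fst (rot t p)) = r" "cmod (snd (rot t p)) = r"
    using cmod_rot_comp[OF sc r0(1)] by (simp_all add: rot_def p_def)
  have pp: "cmod (fst p) = r" "cmod (snd p) = r" using r0 by (simp_all add: p_def norm_mult)
  have kr: "\<kappa> * r \<le> r" using k1 r0(1) mult_right_mono[of \<kappa> 1 r] by simp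
  have Dp: "Dl \<kappa> t j p" for j
    by (simp add: Dl_def D0_def D2_def rp pp kr)
  have PP: "R \<le> norm (word_eval P d t w p) \<and> (3/2) ^ length w * ln (norm p) \<le> ln (norm (word_eval P d t w p))
          \<and> (w \<noteq> [] \<longrightarrow> Tl \<kappa> t (hd w) (word_eval P d t w p))" if rw: "red w" for w
    apply (rule pingpong[where R=R and \<kappa>=\<kappa> and t=t and P=P and d=d and p=p])
         apply (rule R1)
        apply (rule grow; assumption)
       apply (rule LF(1); assumption)
      apply (rule pR)
     apply (rule Dp)
    apply (rule rw)
    done
  have ubw: "max (norm (word_eval P d t u p)) K \<le> (norm p) ^ ((degree P + 1) ^ length u)" for u
    using ub_word[of K P d t "degree P + 1" u p] K3 ub pK by (simp add: max_absorb1)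
  have Lp: "ln (norm p) > 0" using pK K3 by (intro ln_gt_zero) auto
  define D where "D = degree P + 1"
  have D3: "real D \<ge> 3" using deg by (simp add: D_def)
  show "\<exists>c0>0. \<forall>w u. red w \<longrightarrow> word_eval P d t u = word_eval P d t w \<longrightarrow> c0 * real (length w) \<le> real (length u)"
  proof (rule exI[of _ "ln (3/2) / ln (real D)"], rule conjI[OF _ allI], use D3 in simp, intro allI impI)
    fix w u assume rw: "red w" and eq: "word_eval P d t u = word_eval P d t w"
    have A: "(3/2) ^ length w * ln (norm p) \<le> ln (norm (word_eval P d t w p))" using PP[OF rw] by simp
    have pos: "norm (word_eval P d t w p) > 0"
    proof -
      have "R \<le> norm (word_eval P d t w p)" using PP[OF rw] by blast
      thus ?thesis using R1 by linarith
    qed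
    have n1: "norm (word_eval P d t w p) \<le> norm p ^ (D ^ length u)"
      using ubw[of u] eq by (simp add: D_def)
    have pw: "0 < norm p ^ (D ^ length u)" using pK K3 by (intro zero_less_power) linarith
    have "ln (norm (word_eval P d t w p)) \<le> ln (norm p ^ (D ^ length u))"
      using ln_le_cancel_iff[OF pos pw] n1 by blast
    also have "\<dots> = real (D ^ length u) * ln (norm p)" using pK K3 by (simp add: ln_realpow)
    finally have "(3/2) ^ length w * ln (norm p) \<le> real D ^ length u * ln (norm p)" using A by simp
    hence B: "(3/2::real) ^ length w \<le> real D ^ length u" using Lp by simp
    have "ln ((3/2::real) ^ length w) \<le> ln (real D ^ length u)"
      using B D3 by (subst ln_le_cancel_iff) auto
    hence "real (length w) * ln (3/2) \<le> real (length u) * ln (real D)"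
      using D3 by (simp add: ln_realpow)
    moreover have "ln (real D) > 0" using D3 by simp
    ultimately show "ln (3/2) / ln (real D) * real (length w) \<le> real (length u)"
      by (simp add: field_simps)
  qed
  show "\<forall>i j. i < 4 \<longrightarrow> j < 4 \<longrightarrow> gen P d t i = gen P d t j \<longrightarrow> i = j"
  proof (intro allI impI)
    fix i j :: nat assume i: "i < 4" and j: "j < 4" and g: "gen P d t i = gen P d t j"
    have Gi: "Tl \<kappa> t i (gen P d t i p)" "norm p * sqrt (norm p) \<le> norm (gen P d t i p)"
      using grow[OF pR Dp] by auto
    have Gj: "Tl \<kappa> t j (gen P d t i p)" using grow[OF pR Dp, of j] g by auto
    have "norm p * sqrt (norm p) > 0" using pR R1 by (intro mult_pos_pos) auto
    hence "gen P d t i p \<noteq> 0" using Gi(2) by auto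
    thus "i = j" using LF(2)[OF i j _ Gi(1) Gj] by simp
  qed
qed

lemma Sn_fold: "foldr (\<lambda>k f. f \<circ> \<omega> k) xs g = g \<circ> foldr (\<lambda>k f. f \<circ> \<omega> k) xs id"
  by (induction xs arbitrary: g) (auto simp: comp_assoc)

lemma Sn_Suc: "Sn \<omega> (Suc n) = \<omega> n \<circ> Sn \<omega> n"
  unfolding Sn_def by (simp add: Sn_fold[of \<omega> _ "\<omega> n"])

lemma inv4_inv4: "i < 4 \<Longrightarrow> inv4 (inv4 i) = i"
  by (auto simp: inv4_def)

lemma inv4_lt: "inv4 i < 4"
  by (auto simp: inv4_def)

lemma inv4_eq: "a < 4 \<Longrightarrow> j < 4 \<Longrightarrow> (a = inv4 j) = (j = inv4 a)"
  by (auto simp: inv4_def)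

lemma step_red: "red w \<Longrightarrow> j < 4 \<Longrightarrow> red (step w j)"
proof (cases w)
  case Nil
  assume "j < 4" thus ?thesis using Nil by (simp add: step_def)
next
  case (Cons a r)
  assume rw: "red w" and j: "j < 4"
  have a: "a < 4" using rw Cons red_hd by auto
  show ?thesis
  proof (cases "a = inv4 j")
    case True thus ?thesis using rw Cons red_tl by (simp add: step_def)
  next
    case False
    hence "j \<noteq> inv4 a" using inv4_eq[OF a j] by simp
    thus ?thesis using False rw Cons j by (simp add: step_def)
  qed
qed

lemma step_eval: "d \<noteq> 0 \<Longrightarrow> j < 4 \<Longrightarrow> word_eval P d t (step w j) = gen P d t j \<circ> word_eval P d t w"
proof (cases w)
  case Nil
  thus ?thesis by (simp add: step_def word_eval_def)
next
  case (Cons a r)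
  assume d: "d \<noteq> 0" and j: "j < 4"
  show ?thesis
  proof (cases "a = inv4 j")
    case True
    have cancel: "gen P d t j (gen P d t (inv4 j) z) = z" for z
      using gen_cancel[OF d inv4_lt, of P t j z] inv4_inv4[OF j] by simp
    show ?thesis using True Cons by (simp add: step_def word_eval_Cons fun_eq_iff cancel)
  next
    case False thus ?thesis using Cons by (simp add: step_def word_eval_Cons)
  qed
qed

lemma unb:
  fixes f :: "nat \<Rightarrow> nat" and \<epsilon> :: real
  assumes "\<epsilon> > 0" "eventually (\<lambda>n. \<epsilon> * real n \<le> real (f n)) sequentially"
  shows "\<not> bdd_above (range f)"
proof
  assume "bdd_above (range f)"
  then obtain B where B: "\<And>n. f n \<le> B" by (auto simp: bdd_above_def)
  obtain N where N: "\<And>n. n \<ge> N \<Longrightarrow> \<epsilon> * real n \<le> real (f n)" using assms(2) by (auto simp: eventually_sequentially)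
  define n where "n = max N (nat \<lceil>real B / \<epsilon>\<rceil> + 1)"
  have "real B / \<epsilon> < real n" unfolding n_def by linarith
  hence "real B < \<epsilon> * real n" using assms(1) by (simp add: field_simps)
  also have "\<dots> \<le> real (f n)" using N[of n] by (simp add: n_def)
  also have "\<dots> \<le> real B" using B[of n] by simp
  finally show False by simp
qed


theorem mainTheorem3:
  fixes P :: "complex poly" and d :: complex and t :: real
    and a1 a2 a3 a4 :: real
  assumes "degree P \<ge> 2" and "d \<noteq> 0"
    and "0 < t" and "t < 2 * pi"
    and "t \<noteq> pi / 2" and "t \<noteq> pi" and "t \<noteq> 3 * pi / 2"
    and "a1 > 0" and "a2 > 0" and "a3 > 0" and "a4 > 0"
    and "a1 + a2 + a3 + a4 = 1"
  shows "(AE \<omega> in PiM UNIV (\<lambda>_::nat. measure_pmf (nu P d t a1 a2 a3 a4)).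
            \<not> bdd_above (range (\<lambda>n. word_length P d t (Sn \<omega> n))))
       \<and> (\<exists>\<epsilon>>0. AE \<omega> in PiM UNIV (\<lambda>_::nat. measure_pmf (nu P d t a1 a2 a3 a4)).
            \<forall>\<^sub>F n in sequentially. real (word_length P d t (Sn \<omega> n)) \<ge> \<epsilon> * real n)"
proof -
  define A :: "nat \<Rightarrow> real" where "A = (\<lambda>i::nat. if i = 0 then a1 else if i = 1 then a2
                    else if i = 2 then a3 else if i = 3 then a4 else 0)"
  define G where "G = gen P d t"
  define N where "N = nu P d t a1 a2 a3 a4"
  define M where "M = PiM UNIV (\<lambda>_::nat. measure_pmf N)"
  have Apos: "A i > 0" if "i < 4" for i
  proof -
    have "i = 0 \<or> i = 1 \<or> i = 2 \<or> i = 3" using that by auto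
    thus ?thesis using assms(8-11) by (auto simp: A_def)
  qed
  have Asum: "A 0 + A 1 + A 2 + A 3 = 1" using assms(12) by (simp add: A_def)
  have Anonneg: "0 \<le> A x" for x using assms(8-11) by (simp add: A_def)
  have Azero: "A x = 0" if "x \<ge> 4" for x using that by (simp add: A_def)
  have Aint: "(\<integral>\<^sup>+x. ennreal (A x) \<partial>count_space UNIV) = 1"
  proof -
    have "(\<integral>\<^sup>+x. ennreal (A x) \<partial>count_space UNIV) = (\<integral>\<^sup>+x. ennreal (A x) \<partial>count_space {..<4})"
      by (subst nn_integral_count_space_indicator) (auto intro!: nn_integral_cong simp: Azero split: split_indicator)
    also have "\<dots> = (\<Sum>x<4. ennreal (A x))" by (rule nn_integral_count_space_finite) simp
    also have "\<dots> = ennreal (\<Sum>x<4. A x)" using Anonneg by (intro sum_ennreal) auto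
    also have "\<dots> = 1" using Asum by (simp add: sum4)
    finally show ?thesis .
  qed
  define E where "E = embed_pmf A"
  have N_eq: "N = map_pmf G E" by (simp add: N_def nu_def A_def E_def G_def)
  have pmfE: "pmf E x = A x" for x unfolding E_def by (rule pmf_embed_pmf[OF Anonneg Aint])
  have setE: "set_pmf E = {x. A x \<noteq> 0}" unfolding E_def by (rule set_embed_pmf[OF Anonneg Aint])
  have setE4: "x \<in> set_pmf E \<Longrightarrow> x < 4" for x using setE Azero by (metis mem_Collect_eq not_less)
  obtain c0 where c0: "c0 > 0" and GEO: "\<And>w u. red w \<Longrightarrow> word_eval P d t u = word_eval P d t w \<Longrightarrow> c0 * real (length w) \<le> real (length u)"
    using geo(1)[OF assms(1-7)] by blast
  have INJ: "\<And>i j. i < 4 \<Longrightarrow> j < 4 \<Longrightarrow> G i = G j \<Longrightarrow> i = j"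
    using geo(2)[OF assms(1-7)] by (auto simp: G_def)
  define lo where "lo g = (if \<exists>i<4. G i = g then (SOME i. i < 4 \<and> G i = g) else 0)" for g
  have lo4: "lo g < 4" for g
  proof (cases "\<exists>i<4. G i = g")
    case True
    hence "\<exists>i. i < 4 \<and> G i = g" by blast
    from someI_ex[OF this] show ?thesis using True by (simp add: lo_def)
  qed (auto simp: lo_def)
  have loG: "lo (G i) = i" if "i < 4" for i
  proof -
    have ex: "\<exists>j. j < 4 \<and> G j = G i" using that by blast
    from someI_ex[OF ex] have "(SOME j. j < 4 \<and> G j = G i) < 4 \<and> G (SOME j. j < 4 \<and> G j = G i) = G i" .
    hence "(SOME j. j < 4 \<and> G j = G i) = i" using INJ that by blast
    thus ?thesis using that by (auto simp: lo_def)
  qed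
  have intN: "(\<integral>\<^sup>+g. f (lo g) \<partial>measure_pmf N) = (\<Sum>j<4. ennreal (A j) * f j)" for f
  proof -
    have "(\<integral>\<^sup>+g. f (lo g) \<partial>measure_pmf N) = (\<integral>\<^sup>+i. f (lo (G i)) \<partial>measure_pmf E)"
      by (simp add: N_eq)
    also have "\<dots> = (\<Sum>i\<in>{..<4}. f (lo (G i)) * pmf E i)"
      by (rule nn_integral_measure_pmf_support) (auto dest: setE4)
    also have "\<dots> = (\<Sum>j<4. ennreal (A j) * f j)"
      by (intro sum.cong refl) (simp add: loG pmfE mult.commute)
    finally show ?thesis .
  qed
  obtain \<epsilon> where eps: "\<epsilon> > 0" and AE1: "AE \<omega> in M. eventually (\<lambda>n. \<epsilon> * real n < real (length (stk lo [] \<omega> n))) sequentially"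
    using linear_escape[where A=A and N=N and lo=lo, OF Apos Asum lo4 intN] unfolding M_def by blast
  have AE2: "AE \<omega> in M. \<forall>k. \<omega> k \<in> set_pmf N"
    unfolding M_def
    by (subst AE_all_countable) (auto intro!: AE_PiM_component prob_space_measure_pmf AE_measure_pmf)
  have good: "c0 * (\<epsilon> * real n) \<le> real (word_length P d t (Sn \<omega> n))"
    if g: "\<forall>k. \<omega> k \<in> set_pmf N" and lt: "\<epsilon> * real n < real (length (stk lo [] \<omega> n))" for \<omega> n
  proof -
    have gk: "G (lo (\<omega> k)) = \<omega> k" for k
    proof -
      obtain i where "i \<in> set_pmf E" "\<omega> k = G i" using g N_eq by auto
      thus ?thesis using loG setE4 by auto
    qed
    have inv: "red (stk lo [] \<omega> m) \<and> word_eval P d t (stk lo [] \<omega> m) = Sn \<omega> m" for m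
    proof (induction m)
      case 0 thus ?case by (simp add: Sn_def word_eval_def)
    next
      case (Suc m)
      have "red (stk lo [] \<omega> (Suc m))" using Suc step_red lo4 by simp
      moreover have "word_eval P d t (stk lo [] \<omega> (Suc m)) = Sn \<omega> (Suc m)"
        using Suc step_eval[OF assms(2) lo4, of P t "stk lo [] \<omega> m" "\<omega> m"] gk[of m]
        by (simp add: Sn_Suc G_def)
      ultimately show ?case by blast
    qed
    let ?w = "stk lo [] \<omega> n"
    have lets: "set ?w \<subseteq> {0..3}" using stk_letters[of "[]" lo \<omega> n] lo4 by auto
    have ex: "\<exists>m u. length u = m \<and> set u \<subseteq> {0..3} \<and> word_eval P d t u = Sn \<omega> n"
      using inv[of n] lets by blast
    obtain u where u: "length u = word_length P d t (Sn \<omega> n)" "word_eval P d t u = Sn \<omega> n"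
      using LeastI_ex[OF ex] unfolding word_length_def by blast
    have "c0 * real (length ?w) \<le> real (length u)"
      using GEO[of ?w u] inv[of n] u(2) by simp
    moreover have "c0 * (\<epsilon> * real n) \<le> c0 * real (length ?w)" using lt c0 by simp
    ultimately show ?thesis using u(1) by simp
  qed
  have AE3: "AE \<omega> in M. eventually (\<lambda>n. c0 * \<epsilon> * real n \<le> real (word_length P d t (Sn \<omega> n))) sequentially"
    using AE1 AE2
  proof (eventually_elim)
    case (elim \<omega>)
    show ?case using elim(1) by (rule eventually_mono) (use good elim(2) in \<open>simp add: mult.assoc\<close>)
  qed
  have ce: "c0 * \<epsilon> > 0" using c0 eps by simp
  have AE4: "AE \<omega> in M. \<not> bdd_above (range (\<lambda>n. word_length P d t (Sn \<omega> n)))"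
    using AE3 by (rule eventually_mono) (rule unb[OF ce])
  show ?thesis
    using AE4 AE3 ce unfolding M_def N_def by auto
qed

end
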